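(* Let $\Xi$ be a nonzero finite measure on $\Delta$, let $\gamma$ and $w$ be as in the context. (i) If $a=0$ and $\mu:=\int_\Delta|u|\,\nu(\mathrm du)<\infty$, then $w(x,t)\sim xe^{\mu t}$ as $x\to\infty$, for each $t\ge0$. (ii) If the limit $\kappa:=\lim_{x\to\infty}x\gamma''(x)$ exists and is finite, then for every $t\ge0$ there is a function $L_t^{\#}:[1,\infty)\to(0,\infty)$, slowly varying at $\infty$, with $w(x,t)=x^{e^{\kappa t}}L_t^{\#}(x)$ for all $x\ge1$. (iii) Suppose the limit $\kappa:=\lim_{x\to\infty}x\gamma''(x)$ exists and is finite, and let $\gamma_1:(1,\infty)\to(0,\infty)$ be continuous with $(\gamma(x)-\gamma_1(x))/x\to0$ as $x\to\infty$. Then for all $t\ge0$ and $x>1$ there exists a unique $w_1(x,t)\ge x$ with $\int_x^{w_1(x,t)}\frac{\mathrm du}{\gamma_1(u)}=t$ (and set $w_1(1,t):=1$). If moreover, in the case $\kappa=0$, the map $x\mapsto\gamma_1(x)/x$ is nondecreasing on $(1,\infty)$, then $w(x,t)\sim w_1(x,t)$ as $x\to\infty$ for each $t\ge0$.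
   Context: Let $\Delta:=\{u=(u_1,u_2,\ldots):u_1\ge u_2\ge\cdots\ge0,\ \sum_{i\ge1}u_i\le1\}$, and for $u\in\Delta$ write $|u|:=\sum_{i\ge1}u_i$, $(u,u):=\sum_{i\ge1}u_i^2$, and $0:=(0,0,\ldots)$. Let $\Xi$ be a finite measure on $\Delta$, $a:=\Xi(\{0\})$, $\Xi_0:=\Xi-a\delta_0$, and $\nu(\mathrm du):=\Xi_0(\mathrm du)/(u,u)$ on $\Delta\setminus\{0\}$. Define $\gamma(x):=a\frac{x(x-1)}{2}+\int_\Delta\sum_{i\ge1}((1-u_i)^x-1+xu_i)\,\nu(\mathrm du)$, $x\ge0$ ($C^\infty$ on $(0,\infty)$, positive on $(1,\infty)$). In each of the situations (i)–(iii), $\int_2^\infty\frac{\mathrm du}{\gamma(u)}=\infty$, and $w:[1,\infty)\times[0,\infty)\to[1,\infty)$ is defined by $w(1,t):=1$ and, for $x>1$, $t\ge0$, $w(x,t)$ is the unique number in $[x,\infty)$ with $\int_x^{w(x,t)}\frac{\mathrm du}{\gamma(u)}=t$. *)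

theory Defs
  imports "HOL-Analysis.Analysis" "HOL-Library.Landau_Symbols"
begin

text \<open>The simplex Delta of ranked sequences, as a subset of nat => real
  (carrying the product topology / its Borel sigma-algebra).\<close>
definition Delta :: "(nat \<Rightarrow> real) set" where
  "Delta = {u. (\<forall>i. u (Suc i) \<le> u i) \<and> (\<forall>i. 0 \<le> u i) \<and> summable u \<and> (\<Sum>i. u i) \<le> 1}"

definition sabs :: "(nat \<Rightarrow> real) \<Rightarrow> real" where
  "sabs u = (\<Sum>i. u i)"

definition sip :: "(nat \<Rightarrow> real) \<Rightarrow> real" where
  "sip u = (\<Sum>i. (u i)^2)"

text \<open>b to the real power x, with the convention 0^0 = 1.\<close>
definition pw :: "real \<Rightarrow> real \<Rightarrow> real" where
  "pw b x = (if b = 0 then (if x = 0 then 1 else 0) else b powr x)"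

text \<open>a = Xi({0})\<close>
definition atom0 :: "(nat \<Rightarrow> real) measure \<Rightarrow> real" where
  "atom0 Xi = measure Xi {\<lambda>_. 0}"

text \<open>gamma(x) = a x(x-1)/2 + integral over Delta\{0} of the sum, against
  nu(du) = Xi_0(du)/(u,u).\<close>
definition gamma :: "(nat \<Rightarrow> real) measure \<Rightarrow> real \<Rightarrow> real" where
  "gamma Xi x = atom0 Xi * x * (x - 1) / 2
     + (\<integral>u. (if u = (\<lambda>_. 0) then 0 else (\<Sum>i. pw (1 - u i) x - 1 + x * u i) / sip u) \<partial>Xi)"

definition mu :: "(nat \<Rightarrow> real) measure \<Rightarrow> ennreal" where
  "mu Xi = (\<integral>\<^sup>+u. ennreal (if u = (\<lambda>_. 0) then 0 else sabs u / sip u) \<partial>Xi)"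

definition wfun :: "(real \<Rightarrow> real) \<Rightarrow> real \<Rightarrow> real \<Rightarrow> real" where
  "wfun g x t = (if x = 1 then 1 else
      (THE y. x \<le> y \<and> ((\<lambda>u. 1 / g u) has_integral t) {x..y}))"

definition slowly_varying :: "(real \<Rightarrow> real) \<Rightarrow> bool" where
  "slowly_varying L \<longleftrightarrow> (\<forall>x\<ge>1. 0 < L x) \<and> set_borel_measurable borel {1..} L \<and>
     (\<forall>l>0. ((\<lambda>x. L (l * x) / L x) \<longlongrightarrow> 1) at_top)"

end

theory Submission
  imports Defs
begin

definition f0 :: "real \<Rightarrow> real \<Rightarrow> real" where "f0 x s = pw (1 - s) x - 1 + x * s"
definition f1 :: "real \<Rightarrow> real \<Rightarrow> real" where "f1 x s = pw (1 - s) x * ln (1 - s) + s"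
definition f2 :: "real \<Rightarrow> real \<Rightarrow> real" where "f2 x s = pw (1 - s) x * (ln (1 - s))^2"

lemma pw_pos_base: "b > 0 \<Longrightarrow> pw b x = b powr x" by (simp add: pw_def)
lemma pw_zero: "x \<noteq> 0 \<Longrightarrow> pw 0 x = 0" by (simp add: pw_def)

lemma pw_deriv:
  assumes s: "0 \<le> s" "s \<le> 1" and x: "x > 0"
  shows "((\<lambda>y. pw (1 - s) y) has_real_derivative pw (1 - s) x * ln (1 - s)) (at x)"
proof (cases "s = 1")
  case True
  have "((\<lambda>_. 0::real) has_real_derivative 0) (at x)" by simp
  then have "((\<lambda>y. pw (1 - s) y) has_real_derivative 0) (at x)"
    by (rule has_field_derivative_transform_within_open[where S="{0<..}"]) (use x True in \<open>auto simp: pw_def\<close>)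
  then show ?thesis using True x by (simp add: pw_def)
next
  case False
  then have b: "1 - s > 0" using s by auto
  have "((\<lambda>y. exp (y * ln (1 - s))) has_real_derivative exp (x * ln (1 - s)) * ln (1 - s)) (at x)"
    by (auto intro!: derivative_eq_intros)
  then show ?thesis using b by (simp add: pw_def powr_def mult.commute)
qed

lemma f0_deriv: "0 \<le> s \<Longrightarrow> s \<le> 1 \<Longrightarrow> x > 0 \<Longrightarrow> ((\<lambda>y. f0 y s) has_real_derivative f1 x s) (at x)"
  unfolding f0_def f1_def by (auto intro!: derivative_eq_intros pw_deriv)

lemma f1_deriv: "0 \<le> s \<Longrightarrow> s \<le> 1 \<Longrightarrow> x > 0 \<Longrightarrow> ((\<lambda>y. f1 y s) has_real_derivative f2 x s) (at x)"
  unfolding f1_def f2_def by (auto intro!: derivative_eq_intros pw_deriv simp: power2_eq_square)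


lemma xlnx_ge: fixes s :: real assumes "0 \<le> s" "s \<le> 1" shows "(1 - s) * ln (1 - s) \<ge> - s"
proof (cases "s = 1")
  case False
  then have y: "1 - s > 0" using assms by auto
  have "ln (1 / (1 - s)) \<le> 1 / (1 - s) - 1" using ln_le_minus_one[of "1/(1-s)"] y by simp
  then have "- ln (1 - s) \<le> s / (1 - s)" using y by (simp add: ln_div field_simps)
  then have "(1 - s) * (- ln (1 - s)) \<le> s" using y by (simp add: field_simps)
  then show ?thesis by simp
qed (simp)

lemma ln_one_minus_le: fixes s :: real assumes "0 \<le> s" "s < 1" shows "ln (1 - s) \<le> - s"
  using ln_le_minus_one[of "1 - s"] assms by simp

lemma pw_nonneg: "(0::real) \<le> b \<Longrightarrow> 0 \<le> pw b x" by (simp add: pw_def)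
lemma pw_le1: "(0::real) \<le> b \<Longrightarrow> b \<le> 1 \<Longrightarrow> 0 \<le> x \<Longrightarrow> pw b x \<le> 1"
  by (auto simp: pw_def powr_le1)

lemma f1_nonneg: fixes s x :: real assumes "0 \<le> s" "s \<le> 1" "x \<ge> 1" shows "0 \<le> f1 x s"
proof (cases "s = 1")
  case True then show ?thesis using assms by (simp add: f1_def pw_def)
next
  case False
  then have y: "0 < 1 - s" "1 - s \<le> 1" using assms by auto
  have "(1 - s) powr x \<le> 1 - s" using powr_le_one_le[OF y assms(3)] .
  moreover have "ln (1 - s) \<le> 0" using y by simp
  ultimately have "(1 - s) powr x * ln (1 - s) \<ge> (1 - s) * ln (1 - s)"
    by (simp add: mult_right_mono_neg)
  then show ?thesis using xlnx_ge[OF assms(1,2)] y by (simp add: f1_def pw_def)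
qed

lemma f1_pos: fixes s x :: real assumes "0 < s" "s \<le> 1" "x > 1" shows "0 < f1 x s"
proof (cases "s = 1")
  case True then show ?thesis using assms by (simp add: f1_def pw_def)
next
  case False
  then have y: "0 < 1 - s" "1 - s < 1" using assms by auto
  have "(1 - s) powr x < (1 - s) powr 1" by (rule powr_less_mono') (use y assms in auto)
  moreover have "ln (1 - s) < 0" using y by simp
  ultimately have "(1 - s) powr x * ln (1 - s) > (1 - s) * ln (1 - s)"
    using y by (simp add: mult_strict_right_mono_neg)
  moreover have "f1 x s = (1 - s) powr x * ln (1 - s) + s" using y by (simp add: f1_def pw_def)
  ultimately show ?thesis using xlnx_ge[of s] assms by linarith
qed

lemma f0_one: "(s::real) \<le> 1 \<Longrightarrow> f0 1 s = 0"
  by (cases "1 - s = 0") (auto simp: f0_def pw_def)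

lemma f0_nonneg: fixes s x :: real assumes "0 \<le> s" "s \<le> 1" "x \<ge> 1" shows "0 \<le> f0 x s"
proof -
  have "f0 1 s \<le> f0 x s"
  proof (rule DERIV_nonneg_imp_nondecreasing[OF assms(3)])
    fix y assume y: "1 \<le> y" "y \<le> x"
    show "\<exists>d. ((\<lambda>y. f0 y s) has_real_derivative d) (at y) \<and> 0 \<le> d"
      using f0_deriv[of s y] f1_nonneg[of s y] assms y by auto
  qed
  then show ?thesis using assms by (simp add: f0_one)
qed

lemma f0_pos: fixes s x :: real assumes "0 < s" "s \<le> 1" "x > 1" shows "0 < f0 x s"
proof -
  have "f0 1 s < f0 x s"
  proof (rule DERIV_pos_imp_increasing_open[OF assms(3)])
    fix y assume y: "1 < y" "y < x"
    show "\<exists>d. ((\<lambda>y. f0 y s) has_real_derivative d) (at y) \<and> 0 < d"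
      using f0_deriv[of s y] f1_pos[of s y] assms y by auto
  next
    show "continuous_on {1..x} (\<lambda>y. f0 y s)"
    proof (rule DERIV_atLeastAtMost_imp_continuous_on)
      fix y assume "1 \<le> y" "y \<le> x"
      then show "\<exists>d. ((\<lambda>y. f0 y s) has_real_derivative d) (at y)"
        using f0_deriv[of s y] assms by auto
    qed
  qed
  then show ?thesis using assms by (simp add: f0_one)
qed

lemma f1_le: fixes s x :: real assumes "0 \<le> s" "s \<le> 1" "x \<ge> 1" shows "f1 x s \<le> x * s^2"
proof (cases "s = 1")
  case True then show ?thesis using assms by (simp add: f1_def pw_def)
next
  case False
  then have s: "s < 1" using assms by auto
  have y0: "0 \<le> pw (1 - s) x" by (rule pw_nonneg) (use s in auto)
  have "pw (1 - s) x * ln (1 - s) \<le> pw (1 - s) x * (- s)"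
    by (rule mult_left_mono[OF ln_one_minus_le y0]) (use assms s in auto)
  then have "f1 x s \<le> s * (1 - pw (1 - s) x)" by (simp add: f1_def algebra_simps)
  also have "1 - pw (1 - s) x \<le> x * s" using f0_nonneg[OF assms] by (simp add: f0_def)
  then have "s * (1 - pw (1 - s) x) \<le> s * (x * s)" using assms by (intro mult_left_mono) auto
  finally show ?thesis by (simp add: power2_eq_square algebra_simps)
qed

lemma f2_nonneg: "0 \<le> (s::real) \<Longrightarrow> s \<le> 1 \<Longrightarrow> 0 \<le> f2 x s"
  by (simp add: f2_def pw_nonneg)

lemma f2_le: fixes s x :: real assumes "0 \<le> s" "s \<le> 1" "x \<ge> 2" shows "f2 x s \<le> s^2"
proof (cases "s = 1")
  case True then show ?thesis using assms by (simp add: f2_def pw_def)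
next
  case False
  then have y: "0 < 1 - s" "1 - s \<le> 1" using assms by auto
  have "(1 - s) powr x \<le> (1 - s) powr 2" by (rule powr_mono') (use y assms in auto)
  also have "\<dots> = (1 - s)^2" using y by (simp add: powr_realpow)
  finally have a: "(1 - s) powr x * (ln (1 - s))^2 \<le> (1 - s)^2 * (ln (1 - s))^2"
    by (rule mult_right_mono) simp
  have "(1 - s) * ln (1 - s) \<le> 0" by (rule mult_nonneg_nonpos) (use y in auto)
  then have b: "\<bar>(1 - s) * ln (1 - s)\<bar> \<le> s"
    using xlnx_ge[OF assms(1,2)] by linarith
  have "(1 - s)^2 * (ln (1 - s))^2 = ((1 - s) * ln (1 - s))^2" by (simp add: power_mult_distrib)
  also have "\<dots> \<le> s^2" using b by (metis abs_le_square_iff abs_of_nonneg assms(1))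
  finally show ?thesis using a y by (simp add: f2_def pw_def)
qed

lemma f0_le: fixes s x :: real assumes "0 \<le> s" "s \<le> 1" "x \<ge> 1" shows "f0 x s \<le> x^2 * s^2"
proof -
  have "1^2 * s^2 - f0 1 s \<le> x^2 * s^2 - f0 x s"
  proof (rule DERIV_nonneg_imp_nondecreasing[OF assms(3)])
    fix y assume y: "1 \<le> y" "y \<le> x"
    have "((\<lambda>y. y^2 * s^2 - f0 y s) has_real_derivative 2 * y * s^2 - f1 y s) (at y)"
      using f0_deriv[of s y] assms y by (auto intro!: derivative_eq_intros)
    moreover have "2 * y * s^2 - f1 y s \<ge> 0" using f1_le[of s y] assms y
      by (smt (verit) mult_right_mono zero_le_power2)
    ultimately show "\<exists>d. ((\<lambda>y. y^2 * s^2 - f0 y s) has_real_derivative d) (at y) \<and> 0 \<le> d" by blast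
  qed
  moreover have "f0 1 s = 0" using assms by (simp add: f0_one)
  ultimately have "f0 x s \<le> x^2 * s^2 - s^2" by simp
  then show ?thesis by (smt (verit) zero_le_power2)
qed

lemma f0_le_lin: fixes s x :: real assumes "0 \<le> s" "s \<le> 1" "x \<ge> 0" shows "f0 x s \<le> x * s"
  using pw_le1[of "1-s" x] assms by (simp add: f0_def)

lemma h_nonneg: fixes s x :: real assumes "0 \<le> s" "s \<le> 1" "x \<ge> 0" shows "0 \<le> x * f1 x s - f0 x s"
proof (cases "s = 1")
  case True then show ?thesis using assms by (simp add: f0_def f1_def pw_def)
next
  case False
  then have y: "0 < 1 - s" using assms by auto
  define z where "z = (1 - s) powr x"
  have z: "z > 0" using y by (simp add: z_def)
  have lz: "ln z = x * ln (1 - s)" using y by (simp add: z_def ln_powr)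
  have "ln (1 / z) \<le> 1 / z - 1" using ln_le_minus_one[of "1/z"] z by simp
  then have "- ln z \<le> 1 / z - 1" using z by (simp add: ln_div)
  then have "z * (- ln z) \<le> z * (1 / z - 1)" using z by (intro mult_left_mono) auto
  moreover have "z * (1 / z - 1) = 1 - z" using z by (simp add: field_simps)
  ultimately have "0 \<le> 1 - z + z * ln z" by linarith
  moreover have "x * f1 x s - f0 x s = 1 - z + z * ln z"
    using y by (simp add: f0_def f1_def pw_def z_def[symmetric] lz algebra_simps)
  ultimately show ?thesis by simp
qed


lemma integral_deriv:
  fixes F F' :: "real \<Rightarrow> 'a \<Rightarrow> real"
  assumes fm: "finite_measure M" and x: "a < x" "x < b"
    and D: "\<And>y u. a < y \<Longrightarrow> y < b \<Longrightarrow> u \<in> space M \<Longrightarrow> ((\<lambda>y. F y u) has_real_derivative F' y u) (at y)"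
    and B: "\<And>y u. a < y \<Longrightarrow> y < b \<Longrightarrow> u \<in> space M \<Longrightarrow> \<bar>F' y u\<bar> \<le> C"
    and I: "\<And>y. a < y \<Longrightarrow> y < b \<Longrightarrow> integrable M (F y)"
    and Mf: "F' x \<in> borel_measurable M"
  shows "((\<lambda>y. \<integral>u. F y u \<partial>M) has_real_derivative (\<integral>u. F' x u \<partial>M)) (at x)"
  unfolding has_field_derivative_iff
proof (subst tendsto_at_iff_sequentially, intro allI impI)
  interpret finite_measure M by fact
  fix X :: "nat \<Rightarrow> real" assume X: "\<forall>i. X i \<in> UNIV - {x}" "X \<longlonglongrightarrow> x"
  have "\<forall>\<^sub>F i in sequentially. X i \<in> {a<..<b}"
    using X(2) x by (intro topological_tendstoD) auto
  then obtain N where N: "\<And>n. n \<ge> N \<Longrightarrow> X n \<in> {a<..<b}" by (auto simp: eventually_sequentially)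
  define Y where "Y n = X (n + N)" for n
  have Y: "Y n \<in> {a<..<b}" "Y n \<noteq> x" for n using N X(1) by (auto simp: Y_def)
  have Ylim: "Y \<longlonglongrightarrow> x" unfolding Y_def by (rule LIMSEQ_ignore_initial_segment[OF X(2)])
  define Q where "Q n u = (F (Y n) u - F x u) / (Y n - x)" for n u
  have bnd: "\<bar>Q n u\<bar> \<le> C" if u: "u \<in> space M" for n u
  proof -
    have "\<bar>F (Y n) u - F x u\<bar> \<le> C * \<bar>Y n - x\<bar>"
    proof (cases "Y n < x")
      case True
      from MVT2[OF True, of "\<lambda>y. F y u" "\<lambda>y. F' y u"] obtain z where
        "Y n < z" "z < x" "F x u - F (Y n) u = (x - Y n) * F' z u"
        using D[OF _ _ u] Y[of n] x by (force)
      moreover have "\<bar>F' z u\<bar> \<le> C" using B[OF _ _ u, of z] Y[of n] x \<open>Y n < z\<close> \<open>z < x\<close> by auto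
      ultimately show ?thesis using True by (simp add: abs_mult abs_minus_commute mult.commute mult_right_mono)
    next
      case False
      then have lt: "x < Y n" using Y(2)[of n] by auto
      from MVT2[OF lt, of "\<lambda>y. F y u" "\<lambda>y. F' y u"] obtain z where
        "x < z" "z < Y n" "F (Y n) u - F x u = (Y n - x) * F' z u"
        using D[OF _ _ u] Y[of n] x by (force)
      moreover have "\<bar>F' z u\<bar> \<le> C" using B[OF _ _ u, of z] Y[of n] x \<open>x < z\<close> \<open>z < Y n\<close> by auto
      ultimately show ?thesis using lt by (simp add: abs_mult mult.commute mult_right_mono)
    qed
    then show ?thesis using Y(2)[of n] by (simp add: Q_def abs_divide divide_le_eq)
  qed
  have lim: "(\<lambda>n. Q n u) \<longlonglongrightarrow> F' x u" if u: "u \<in> space M" for u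
  proof -
    have "((\<lambda>y. (F y u - F x u) / (y - x)) \<longlongrightarrow> F' x u) (at x)"
      using D[OF x u] unfolding has_field_derivative_iff .
    then have "((\<lambda>y. (F y u - F x u) / (y - x)) \<circ> Y) \<longlonglongrightarrow> F' x u"
      using Y Ylim by (subst (asm) tendsto_at_iff_sequentially) auto
    then show ?thesis by (simp add: Q_def comp_def)
  qed
  have "(\<lambda>n. \<integral>u. Q n u \<partial>M) \<longlonglongrightarrow> (\<integral>u. F' x u \<partial>M)"
  proof (rule integral_dominated_convergence[where w="\<lambda>_. C"])
    show "F' x \<in> borel_measurable M" by fact
    show "Q n \<in> borel_measurable M" for n
      unfolding Q_def using I[of "Y n"] I[of x] Y[of n] x by auto
    show "integrable M (\<lambda>_. C)" by simp
    show "AE u in M. (\<lambda>n. Q n u) \<longlonglongrightarrow> F' x u" using lim by auto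
    show "AE u in M. norm (Q n u) \<le> C" for n using bnd by auto
  qed
  moreover have "(\<integral>u. Q n u \<partial>M) = ((\<integral>u. F (Y n) u \<partial>M) - (\<integral>u. F x u \<partial>M)) / (Y n - x)" for n
    unfolding Q_def using I[of "Y n"] I[of x] Y[of n] x by simp
  ultimately have "(\<lambda>n. ((\<integral>u. F (Y n) u \<partial>M) - (\<integral>u. F x u \<partial>M)) / (Y n - x)) \<longlonglongrightarrow> (\<integral>u. F' x u \<partial>M)"
    by simp
  then show "((\<lambda>y. ((\<integral>u. F y u \<partial>M) - (\<integral>u. F x u \<partial>M)) / (y - x)) \<circ> X) \<longlonglongrightarrow> (\<integral>u. F' x u \<partial>M)"
    unfolding comp_def Y_def by (rule LIMSEQ_offset)
qed


definition Phi :: "(real \<Rightarrow> real) \<Rightarrow> (nat \<Rightarrow> real) \<Rightarrow> real" where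
  "Phi k u = (if u = (\<lambda>_. 0) then 0 else (\<Sum>i. k (u i)) / sip u)"

lemma coord_meas[measurable]: "(\<lambda>u::nat\<Rightarrow>real. u i) \<in> borel_measurable borel"
  by (rule borel_measurable_continuous_onI) simp

lemma Phi_meas_borel:
  assumes [measurable]: "k \<in> borel_measurable borel"
  shows "Phi k \<in> borel_measurable borel"
proof -
  have eq: "Phi k = (\<lambda>u. if (\<forall>i. u i = 0) then 0 else (\<Sum>i. k (u i)) / (\<Sum>i. (u i)^2))"
    by (auto simp: Phi_def sip_def fun_eq_iff)
  show ?thesis unfolding eq by measurable
qed

lemma Phi_meas:
  assumes "k \<in> borel_measurable borel" "sets Xi = sets (restrict_space borel Delta)"
  shows "Phi k \<in> borel_measurable Xi"
proof -
  have "Phi k \<in> borel_measurable (restrict_space borel Delta)"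
    by (rule measurable_restrict_space1) (rule Phi_meas_borel[OF assms(1)])
  then show ?thesis using measurable_cong_sets[where N="borel::real measure" and N'="borel::real measure", OF assms(2) refl] by simp
qed

lemma Delta_D:
  assumes "u \<in> Delta"
  shows "0 \<le> u i" "u i \<le> 1" "summable u" "summable (\<lambda>i. (u i)^2)"
proof -
  show s: "summable u" and n: "0 \<le> u i" using assms by (auto simp: Delta_def)
  have "sum u {i} \<le> suminf u" by (rule sum_le_suminf[OF s]) (use assms in \<open>auto simp: Delta_def\<close>)
  then show "u i \<le> 1" using assms by (auto simp: Delta_def)
  have "\<And>j. norm ((u j)^2) \<le> u j"
  proof -
    fix j
    have "0 \<le> u j" "u j \<le> 1" using assms sum_le_suminf[OF s, of "{j}"] by (auto simp: Delta_def)
    then show "norm ((u j)^2) \<le> u j" by (simp add: power2_eq_square mult_left_le)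
  qed
  then show "summable (\<lambda>i. (u i)^2)" by (rule summable_comparison_test'[OF s]) 
qed

lemma sip_pos: assumes "u \<in> Delta" "u \<noteq> (\<lambda>_. 0)" shows "0 < sip u"
proof -
  obtain i where "u i \<noteq> 0" using assms(2) by auto
  then have "0 < (u i)^2" by simp
  then show ?thesis using suminf_pos2[OF Delta_D(4)[OF assms(1)], of i] by (simp add: sip_def)
qed

lemma series_bound:
  assumes u: "u \<in> Delta" and k: "\<And>s. 0 \<le> s \<Longrightarrow> s \<le> 1 \<Longrightarrow> \<bar>k s\<bar> \<le> C * s^2"
  shows "summable (\<lambda>i. k (u i))" "\<bar>\<Sum>i. k (u i)\<bar> \<le> C * sip u"
proof -
  have sq: "summable (\<lambda>i. C * (u i)^2)" using Delta_D(4)[OF u] by (rule summable_mult)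
  have b: "\<bar>k (u i)\<bar> \<le> C * (u i)^2" for i using k Delta_D[OF u] by auto
  show s: "summable (\<lambda>i. k (u i))" by (rule summable_comparison_test'[OF sq]) (use b in auto)
  have "(\<Sum>i. k (u i)) \<le> (\<Sum>i. C * (u i)^2)" by (rule suminf_le[OF _ s sq]) (use b abs_le_iff in auto)
  moreover have "(\<Sum>i. - k (u i)) \<le> (\<Sum>i. C * (u i)^2)"
    by (rule suminf_le[OF _ summable_minus[OF s] sq]) (use b abs_le_iff in auto)
  moreover have "(\<Sum>i. C * (u i)^2) = C * sip u" unfolding sip_def
    by (rule suminf_mult[OF Delta_D(4)[OF u]])
  moreover have "(\<Sum>i. - k (u i)) = - (\<Sum>i. k (u i))" by (rule suminf_minus[OF s])
  ultimately show "\<bar>\<Sum>i. k (u i)\<bar> \<le> C * sip u" by linarith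
qed

lemma Phi_bound:
  assumes u: "u \<in> Delta" and k: "\<And>s. 0 \<le> s \<Longrightarrow> s \<le> 1 \<Longrightarrow> \<bar>k s\<bar> \<le> C * s^2" and C: "C \<ge> 0"
  shows "\<bar>Phi k u\<bar> \<le> C"
proof (cases "u = (\<lambda>_. 0)")
  case False
  have p: "sip u > 0" by (rule sip_pos[OF u False])
  have "\<bar>\<Sum>i. k (u i)\<bar> \<le> C * sip u" by (rule series_bound[OF u k])
  then show ?thesis using False p by (simp add: Phi_def abs_divide divide_le_eq)
qed (simp add: Phi_def C)

lemma Phi_nonneg:
  assumes u: "u \<in> Delta" and k: "\<And>s. 0 \<le> s \<Longrightarrow> s \<le> 1 \<Longrightarrow> \<bar>k s\<bar> \<le> C * s^2"
    and kn: "\<And>s. 0 \<le> s \<Longrightarrow> s \<le> 1 \<Longrightarrow> 0 \<le> k s"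
  shows "0 \<le> Phi k u"
proof (cases "u = (\<lambda>_. 0)")
  case False
  have p: "sip u > 0" by (rule sip_pos[OF u False])
  have "0 \<le> (\<Sum>i. k (u i))" by (rule suminf_nonneg[OF series_bound(1)[OF u k]]) (use kn Delta_D[OF u] in auto)
  then show ?thesis using p by (simp add: Phi_def)
qed (simp add: Phi_def)

lemma Phi_pos:
  assumes u: "u \<in> Delta" "u \<noteq> (\<lambda>_. 0)" and k: "\<And>s. 0 \<le> s \<Longrightarrow> s \<le> 1 \<Longrightarrow> \<bar>k s\<bar> \<le> C * s^2"
    and kn: "\<And>s. 0 \<le> s \<Longrightarrow> s \<le> 1 \<Longrightarrow> 0 \<le> k s"
    and kp: "\<And>s. 0 < s \<Longrightarrow> s \<le> 1 \<Longrightarrow> 0 < k s"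
  shows "0 < Phi k u"
proof -
  have p: "sip u > 0" by (rule sip_pos[OF u])
  obtain i where "u i \<noteq> 0" using u(2) by auto
  then have "0 < k (u i)" using kp Delta_D[OF u(1)] by (simp add: order_le_neq_trans)
  then have "0 < (\<Sum>i. k (u i))"
    by (intro suminf_pos2[OF series_bound(1)[OF u(1) k]]) (use kn Delta_D[OF u(1)] in auto)
  then show ?thesis using p u(2) by (simp add: Phi_def)
qed

lemma Phi_deriv:
  assumes u: "u \<in> Delta" and x: "a < x" "x < b"
    and D: "\<And>y s. a < y \<Longrightarrow> y < b \<Longrightarrow> 0 \<le> s \<Longrightarrow> s \<le> 1 \<Longrightarrow> ((\<lambda>y. K y s) has_real_derivative K' y s) (at y)"
    and B': "\<And>y s. a < y \<Longrightarrow> y < b \<Longrightarrow> 0 \<le> s \<Longrightarrow> s \<le> 1 \<Longrightarrow> \<bar>K' y s\<bar> \<le> C * s^2"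
    and B: "\<And>s. 0 \<le> s \<Longrightarrow> s \<le> 1 \<Longrightarrow> \<bar>K x s\<bar> \<le> C * s^2"
  shows "((\<lambda>y. Phi (K y) u) has_real_derivative Phi (K' x) u) (at x)"
proof (cases "u = (\<lambda>_. 0)")
  case True then show ?thesis by (simp add: Phi_def)
next
  case False
  have ser: "((\<lambda>y. \<Sum>n. K y (u n)) has_field_derivative (\<Sum>n. K' x (u n))) (at x)"
  proof (rule has_field_derivative_series'(2)[of "{a<..<b}" "\<lambda>n y. K y (u n)" "\<lambda>n y. K' y (u n)" x x])
    show "convex {a<..<b}" by simp
    show "((\<lambda>y. K y (u n)) has_field_derivative K' y (u n)) (at y within {a<..<b})" if "y \<in> {a<..<b}" for n y
      using D[of y "u n"] that Delta_D[OF u] by (auto intro: has_field_derivative_at_within)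
    show "uniformly_convergent_on {a<..<b} (\<lambda>n y. \<Sum>i<n. K' y (u i))"
      by (rule Weierstrass_m_test'[where M="\<lambda>i. C * (u i)^2"])
         (use B' Delta_D[OF u] in \<open>auto intro: summable_mult\<close>)
    show "x \<in> {a<..<b}" using x by simp
    show "summable (\<lambda>n. K x (u n))" by (rule series_bound(1)[OF u B])
    show "x \<in> interior {a<..<b}" using x by simp
  qed
  then have "((\<lambda>y. (\<Sum>n. K y (u n)) / sip u) has_field_derivative (\<Sum>n. K' x (u n)) / sip u) (at x)"
    by (rule DERIV_cdivide)
  then show ?thesis using False by (simp add: Phi_def)
qed


lemma series_summable_lin:
  assumes u: "u \<in> Delta" and k: "\<And>s. 0 \<le> s \<Longrightarrow> s \<le> 1 \<Longrightarrow> \<bar>k s\<bar> \<le> C * s"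
  shows "summable (\<lambda>i. k (u i))"
proof -
  have "summable (\<lambda>i. C * u i)" using Delta_D(3)[OF u] by (rule summable_mult)
  then show ?thesis by (rule summable_comparison_test') (use k Delta_D[OF u] in auto)
qed

lemma Phi_mono:
  assumes u: "u \<in> Delta" and k1: "\<And>s. 0 \<le> s \<Longrightarrow> s \<le> 1 \<Longrightarrow> \<bar>k1 s\<bar> \<le> C * s"
    and k2: "\<And>s. 0 \<le> s \<Longrightarrow> s \<le> 1 \<Longrightarrow> \<bar>k2 s\<bar> \<le> C * s"
    and le: "\<And>s. 0 \<le> s \<Longrightarrow> s \<le> 1 \<Longrightarrow> k1 s \<le> k2 s"
  shows "Phi k1 u \<le> Phi k2 u"
proof (cases "u = (\<lambda>_. 0)")
  case False
  have p: "sip u > 0" by (rule sip_pos[OF u False])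
  have "(\<Sum>i. k1 (u i)) \<le> (\<Sum>i. k2 (u i))"
    by (rule suminf_le[OF _ series_summable_lin[OF u k1] series_summable_lin[OF u k2]])
       (use le Delta_D[OF u] in auto)
  then show ?thesis using p False by (simp add: Phi_def divide_right_mono)
qed (simp add: Phi_def)

lemma Phi_lin:
  assumes u: "u \<in> Delta" and k1: "\<And>s. 0 \<le> s \<Longrightarrow> s \<le> 1 \<Longrightarrow> \<bar>k1 s\<bar> \<le> C * s"
    and k2: "\<And>s. 0 \<le> s \<Longrightarrow> s \<le> 1 \<Longrightarrow> \<bar>k2 s\<bar> \<le> C * s"
  shows "Phi (\<lambda>s. c * k1 s - d * k2 s) u = c * Phi k1 u - d * Phi k2 u"
proof (cases "u = (\<lambda>_. 0)")
  case False
  have s1: "summable (\<lambda>i. k1 (u i))" by (rule series_summable_lin[OF u k1])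
  have s2: "summable (\<lambda>i. k2 (u i))" by (rule series_summable_lin[OF u k2])
  have "(\<Sum>i. c * k1 (u i) - d * k2 (u i)) = c * (\<Sum>i. k1 (u i)) - d * (\<Sum>i. k2 (u i))"
    using suminf_diff[OF summable_mult[OF s1, of c] summable_mult[OF s2, of d]]
      suminf_mult[OF s1, of c] suminf_mult[OF s2, of d] by simp
  then show ?thesis using False by (simp add: Phi_def diff_divide_distrib)
qed (simp add: Phi_def)

lemma f0_meas[measurable]: "f0 x \<in> borel_measurable borel"
  unfolding f0_def pw_def by measurable
lemma f1_meas[measurable]: "f1 x \<in> borel_measurable borel"
  unfolding f1_def pw_def by measurable
lemma f2_meas[measurable]: "f2 x \<in> borel_measurable borel"
  unfolding f2_def pw_def by measurable

lemma f0_abs: "0 \<le> s \<Longrightarrow> s \<le> 1 \<Longrightarrow> 1 \<le> x \<Longrightarrow> \<bar>f0 x s\<bar> \<le> x^2 * s^2"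
  using f0_nonneg[of s x] f0_le[of s x] by simp
lemma f1_abs: "0 \<le> s \<Longrightarrow> s \<le> 1 \<Longrightarrow> 1 \<le> x \<Longrightarrow> x \<le> c \<Longrightarrow> \<bar>f1 x s\<bar> \<le> c * s^2"
  using f1_nonneg[of s x] f1_le[of s x] by (smt (verit) mult_right_mono zero_le_power2)
lemma f2_abs: "0 \<le> s \<Longrightarrow> s \<le> 1 \<Longrightarrow> 2 \<le> x \<Longrightarrow> \<bar>f2 x s\<bar> \<le> 1 * s^2"
  using f2_nonneg[of s x] f2_le[of s x] by simp
lemma sq_le_lin: "0 \<le> (s::real) \<Longrightarrow> s \<le> 1 \<Longrightarrow> 0 \<le> C \<Longrightarrow> C * s^2 \<le> C * s"
  by (intro mult_left_mono) (auto simp: power2_eq_square mult_left_le)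

lemma f0_lin: "0 \<le> s \<Longrightarrow> s \<le> 1 \<Longrightarrow> 1 \<le> x \<Longrightarrow> \<bar>f0 x s\<bar> \<le> x^2 * s"
proof -
  assume a: "0 \<le> s" "s \<le> 1" "1 \<le> x"
  have "1 * x \<le> x * x" by (rule mult_right_mono) (use a in auto)
  then have "x * s \<le> x^2 * s" by (intro mult_right_mono) (use a in \<open>auto simp: power2_eq_square\<close>)
  then show ?thesis using f0_nonneg[of s x] f0_le_lin[of s x] a by auto
qed
lemma f1_lin: "0 \<le> s \<Longrightarrow> s \<le> 1 \<Longrightarrow> 1 \<le> x \<Longrightarrow> \<bar>f1 x s\<bar> \<le> x * s"
proof -
  assume a: "0 \<le> s" "s \<le> 1" "1 \<le> x"
  have "x * s^2 \<le> x * s" by (rule sq_le_lin) (use a in auto)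
  then show ?thesis using f1_abs[of s x x] a by linarith
qed

context
  fixes Xi :: "(nat \<Rightarrow> real) measure"
  assumes fin: "finite_measure Xi"
    and sets: "sets Xi = sets (restrict_space borel Delta)"
begin

interpretation finite_measure Xi by (rule fin)

lemma space_Xi: "space Xi = Delta"
  using sets_eq_imp_space_eq[OF sets] by (simp add: space_restrict_space)

lemma Phi_meas_Xi: "k \<in> borel_measurable borel \<Longrightarrow> Phi k \<in> borel_measurable Xi"
  by (rule Phi_meas[OF _ sets])

lemma Phi_integrable:
  assumes "k \<in> borel_measurable borel" "\<And>s. 0 \<le> s \<Longrightarrow> s \<le> 1 \<Longrightarrow> \<bar>k s\<bar> \<le> C * s^2" "C \<ge> 0"
  shows "integrable Xi (Phi k)"
  by (rule integrable_const_bound[where B=C])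
     (use Phi_bound[OF _ assms(2,3)] Phi_meas_Xi[OF assms(1)] space_Xi in auto)

definition G :: "(real \<Rightarrow> real \<Rightarrow> real) \<Rightarrow> real \<Rightarrow> real" where
  "G k x = (\<integral>u. Phi (k x) u \<partial>Xi)"

lemma gamma_eq: "gamma Xi x = atom0 Xi * x * (x - 1) / 2 + G f0 x"
  unfolding gamma_def G_def Phi_def f0_def by simp

lemma G0_deriv: assumes "x > 1" shows "(G f0 has_real_derivative G f1 x) (at x)"
  unfolding G_def
proof (rule integral_deriv[OF fin, of 1 x "x+1" _ _ "x+1"])
  show "1 < x" "x < x + 1" using assms by auto
  fix y u assume y: "1 < y" "y < x + 1" and u: "u \<in> space Xi"
  then have u: "u \<in> Delta" using space_Xi by simp
  show "((\<lambda>y. Phi (f0 y) u) has_real_derivative Phi (f1 y) u) (at y)"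
  proof (rule Phi_deriv[OF u, of 1 y "x+1" _ _ "(x+1)^2"])
    show "1 < y" "y < x + 1" by (fact y)+
    show "((\<lambda>y. f0 y s) has_real_derivative f1 z s) (at z)" if "1 < z" "0 \<le> s" "s \<le> 1" for z s
      using f0_deriv that by auto
    have c: "x + 1 \<le> (x + 1) * (x + 1)" using mult_right_mono[of 1 "x+1" "x+1"] assms by simp
    show "\<bar>f1 z s\<bar> \<le> (x + 1)^2 * s^2" if "1 < z" "z < x + 1" "0 \<le> s" "s \<le> 1" for z s
    proof -
      have "z \<le> (x + 1) * (x + 1)" using that c by linarith
      then show ?thesis using f1_abs[of s z "(x+1)^2"] that by (simp add: power2_eq_square)
    qed
    show "\<bar>f0 y s\<bar> \<le> (x + 1)^2 * s^2" if "0 \<le> s" "s \<le> 1" for s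
    proof -
      have "y^2 \<le> (x + 1)^2" by (rule power_mono) (use y in auto)
      then have "y^2 * s^2 \<le> (x + 1)^2 * s^2" by (rule mult_right_mono) simp
      then show ?thesis using f0_abs[of s y] that y by auto
    qed
  qed
  show "\<bar>Phi (f1 y) u\<bar> \<le> x + 1"
    by (rule Phi_bound[OF u]) (use f1_abs y in auto)
next
  fix y assume y: "1 < y" "y < x + 1"
  show "integrable Xi (Phi (f0 y))"
    by (rule Phi_integrable[of _ "y^2"]) (use f0_abs y in auto)
next
  show "Phi (f1 x) \<in> borel_measurable Xi" by (rule Phi_meas_Xi) simp
qed

lemma G1_deriv: assumes "x > 2" shows "(G f1 has_real_derivative G f2 x) (at x)"
  unfolding G_def
proof (rule integral_deriv[OF fin, of 2 x "x+1" _ _ "1"])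
  show "2 < x" "x < x + 1" using assms by auto
  fix y u assume y: "2 < y" "y < x + 1" and u: "u \<in> space Xi"
  then have u: "u \<in> Delta" using space_Xi by simp
  show "((\<lambda>y. Phi (f1 y) u) has_real_derivative Phi (f2 y) u) (at y)"
  proof (rule Phi_deriv[OF u, of 2 y "x+1" _ _ "x+1"])
    show "2 < y" "y < x + 1" by (fact y)+
    show "((\<lambda>y. f1 y s) has_real_derivative f2 z s) (at z)" if "2 < z" "0 \<le> s" "s \<le> 1" for z s
      using f1_deriv that by auto
    show "\<bar>f2 z s\<bar> \<le> (x + 1) * s^2" if "2 < z" "z < x + 1" "0 \<le> s" "s \<le> 1" for z s
    proof -
      have "1 * s^2 \<le> (x + 1) * s^2" by (rule mult_right_mono) (use that in auto)
      then show ?thesis using f2_abs[of s z] that by auto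
    qed
    show "\<bar>f1 y s\<bar> \<le> (x + 1) * s^2" if "0 \<le> s" "s \<le> 1" for s
      using f1_abs[of s y "x+1"] that y by auto
  qed
  show "\<bar>Phi (f2 y) u\<bar> \<le> 1"
    by (rule Phi_bound[OF u]) (use f2_abs y in auto)
next
  fix y assume y: "2 < y" "y < x + 1"
  show "integrable Xi (Phi (f1 y))"
    by (rule Phi_integrable[of _ "y"]) (use f1_abs y in auto)
next
  show "Phi (f2 x) \<in> borel_measurable Xi" by (rule Phi_meas_Xi) simp
qed

definition D1 where "D1 x = atom0 Xi * (2 * x - 1) / 2 + G f1 x"
definition D2 where "D2 x = atom0 Xi + G f2 x"

lemma gamma_deriv: assumes "x > 1" shows "(gamma Xi has_real_derivative D1 x) (at x)"
proof -
  have d: "(G f0 has_real_derivative G f1 x) (at x)" by (rule G0_deriv[OF assms])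
  have "((\<lambda>x. atom0 Xi * x * (x - 1) / 2 + G f0 x) has_real_derivative atom0 Xi * (2 * x - 1) / 2 + G f1 x) (at x)"
    using d by (auto intro!: derivative_eq_intros) (simp add: field_simps; simp add: algebra_simps)
  then show ?thesis unfolding gamma_eq[abs_def] D1_def .
qed

lemma D1_deriv: assumes "x > 2" shows "(D1 has_real_derivative D2 x) (at x)"
proof -
  have d: "(G f1 has_real_derivative G f2 x) (at x)" by (rule G1_deriv[OF assms])
  have "((\<lambda>x. atom0 Xi * (2 * x - 1) / 2 + G f1 x) has_real_derivative atom0 Xi + G f2 x) (at x)"
    using d by (auto intro!: derivative_eq_intros)
  then show ?thesis unfolding D1_def[abs_def] D2_def .
qed

lemma deriv_gamma: "x > 1 \<Longrightarrow> deriv (gamma Xi) x = D1 x"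
  using gamma_deriv DERIV_imp_deriv by blast

lemma deriv2_gamma: assumes "x > 2" shows "deriv (deriv (gamma Xi)) x = D2 x"
proof -
  have "(deriv (gamma Xi) has_real_derivative D2 x) (at x)"
    by (rule has_field_derivative_transform_within_open[OF D1_deriv[OF assms], of "{1<..}"])
       (use assms deriv_gamma in auto)
  then show ?thesis by (rule DERIV_imp_deriv)
qed

lemma atom0_nonneg: "atom0 Xi \<ge> 0" by (simp add: atom0_def)

lemma H_nonneg: assumes "x > 1" shows "x * D1 x - gamma Xi x \<ge> 0"
proof -
  have i1: "integrable Xi (Phi (f1 x))" by (rule Phi_integrable[of _ x]) (use f1_abs assms in auto)
  have i0: "integrable Xi (Phi (f0 x))" by (rule Phi_integrable[of _ "x^2"]) (use f0_abs assms in auto)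
  have "x * G f1 x - G f0 x = (\<integral>u. x * Phi (f1 x) u - Phi (f0 x) u \<partial>Xi)"
    using i0 i1 by (simp add: G_def)
  also have "\<dots> \<ge> 0"
  proof (rule integral_nonneg_AE, rule AE_I2)
    fix u assume "u \<in> space Xi"
    then have u: "u \<in> Delta" using space_Xi by simp
    have b1: "\<bar>f1 x s\<bar> \<le> (x^2 + x) * s" and b0: "\<bar>f0 x s\<bar> \<le> (x^2 + x) * s"
      if s: "0 \<le> s" "s \<le> 1" for s
    proof -
      have "x * s \<le> (x^2 + x) * s" "x^2 * s \<le> (x^2 + x) * s" using s assms by (auto intro!: mult_right_mono)
      then show "\<bar>f1 x s\<bar> \<le> (x^2 + x) * s" "\<bar>f0 x s\<bar> \<le> (x^2 + x) * s"
        using f1_lin[OF s, of x] f0_lin[OF s, of x] assms by linarith+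
    qed
    have "x * Phi (f1 x) u - 1 * Phi (f0 x) u = Phi (\<lambda>s. x * f1 x s - 1 * f0 x s) u"
      using Phi_lin[OF u b1 b0, of x 1] by simp
    also have "\<dots> \<ge> 0"
    proof (rule Phi_nonneg[OF u, of _ "x * x + x^2"])
      fix s :: real assume s: "0 \<le> s" "s \<le> 1"
      have ax: "\<bar>x * f1 x s\<bar> = x * \<bar>f1 x s\<bar>" using assms by (simp add: abs_mult)
      have "\<bar>x * f1 x s - 1 * f0 x s\<bar> \<le> x * \<bar>f1 x s\<bar> + \<bar>f0 x s\<bar>"
        using abs_triangle_ineq4[of "x * f1 x s" "f0 x s"] ax by simp
      also have "\<dots> \<le> x * (x * s^2) + x^2 * s^2"
        using f1_abs[OF s, of x x] f0_abs[OF s, of x] assms by (intro add_mono mult_left_mono) auto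
      finally show "\<bar>x * f1 x s - 1 * f0 x s\<bar> \<le> (x * x + x^2) * s^2" by (simp add: algebra_simps)
      show "0 \<le> x * f1 x s - 1 * f0 x s" using h_nonneg[OF s, of x] assms by simp
    qed
    finally show "0 \<le> x * Phi (f1 x) u - Phi (f0 x) u" by simp
  qed
  finally have "x * G f1 x - G f0 x \<ge> 0" .
  moreover have "x * (atom0 Xi * (2 * x - 1) / 2) - atom0 Xi * x * (x - 1) / 2 = atom0 Xi * x^2 / 2"
  proof -
    have "x * (atom0 Xi * (2 * x - 1) / 2) - atom0 Xi * x * (x - 1) / 2
       = (x * (atom0 Xi * (2 * x - 1)) - atom0 Xi * x * (x - 1)) / 2" by (simp add: diff_divide_distrib)
    also have "x * (atom0 Xi * (2 * x - 1)) - atom0 Xi * x * (x - 1) = atom0 Xi * x^2"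
      by (simp add: algebra_simps power2_eq_square)
    finally show ?thesis .
  qed
  moreover have "atom0 Xi * x^2 / 2 \<ge> 0" using atom0_nonneg by simp
  moreover have "x * D1 x - gamma Xi x = (x * (atom0 Xi * (2 * x - 1) / 2) - atom0 Xi * x * (x - 1) / 2) + (x * G f1 x - G f0 x)"
    unfolding D1_def gamma_eq by (simp add: algebra_simps)
  ultimately show ?thesis by linarith
qed

end

definition Ig :: "(real \<Rightarrow> real) \<Rightarrow> real \<Rightarrow> real \<Rightarrow> real" where
  "Ig g a b = integral {a..b} (\<lambda>u. 1 / g u)"

definition divg :: "(real \<Rightarrow> real) \<Rightarrow> bool" where
  "divg g \<longleftrightarrow> (\<forall>x T. x > 1 \<longrightarrow> (\<exists>y\<ge>x. T \<le> Ig g x y))"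

lemma ln_has_integral:
  fixes a b :: real
  assumes "0 < a" "a \<le> b"
  shows "((\<lambda>u. 1 / u) has_integral (ln b - ln a)) {a..b}"
proof (rule fundamental_theorem_of_calculus[OF assms(2)])
  fix x assume "x \<in> {a..b}"
  then have "x > 0" using assms by auto
  then show "(ln has_vector_derivative 1 / x) (at x within {a..b})"
    using DERIV_ln_divide[of x] has_field_derivative_at_within
    by (auto simp: has_real_derivative_iff_has_vector_derivative[symmetric])
qed

context
  fixes g :: "real \<Rightarrow> real"
  assumes gc: "continuous_on {1<..} g" and gp: "\<And>x. x > 1 \<Longrightarrow> g x > 0"
begin

lemma ig_cont: "1 < a \<Longrightarrow> continuous_on {a..b} (\<lambda>u. 1 / g u)"
  by (intro continuous_intros continuous_on_subset[OF gc]) (use gp in \<open>auto simp: less_imp_neq[symmetric]\<close>)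

lemma ig_int: "1 < a \<Longrightarrow> (\<lambda>u. 1 / g u) integrable_on {a..b}"
  by (rule integrable_continuous_interval[OF ig_cont])

lemma I_has: "1 < a \<Longrightarrow> ((\<lambda>u. 1 / g u) has_integral Ig g a b) {a..b}"
  unfolding Ig_def by (rule integrable_integral[OF ig_int])

lemma I_add: "1 < a \<Longrightarrow> a \<le> b \<Longrightarrow> b \<le> c \<Longrightarrow> Ig g a b + Ig g b c = Ig g a c"
  unfolding Ig_def using Henstock_Kurzweil_Integration.integral_combine[where f="\<lambda>u. 1 / g u" and a=a and c=b and b=c] ig_int[of a c] by auto

lemma I_nonneg: "1 < a \<Longrightarrow> 0 \<le> Ig g a b"
  unfolding Ig_def by (rule integral_nonneg[OF ig_int]) (use gp in \<open>auto simp: less_imp_le\<close>)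

lemma I_pos: assumes "1 < a" "a < b" shows "0 < Ig g a b"
proof -
  have "continuous_on {a..b} g" by (rule continuous_on_subset[OF gc]) (use assms in auto)
  then obtain m where m: "m \<in> {a..b}" "\<And>y. y \<in> {a..b} \<Longrightarrow> g y \<le> g m"
    using continuous_attains_sup[of "{a..b}" g] assms by auto
  have gm: "g m > 0" using gp m assms by auto
  have "((\<lambda>_. 1 / g m) has_integral (b - a) * (1 / g m)) {a..b}"
    using has_integral_const_real[of "1 / g m" a b] assms by simp
  moreover have "1 / g m \<le> 1 / g y" if "y \<in> {a..b}" for y
    using m(2)[OF that] gp[of y] that assms by (intro divide_left_mono) auto
  ultimately have "(b - a) * (1 / g m) \<le> Ig g a b"
    by (intro has_integral_le[OF _ I_has]) (use assms in auto)
  moreover have "(b - a) * (1 / g m) > 0" using gm assms by simp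
  ultimately show ?thesis by linarith
qed

lemma I_cont: "1 < a \<Longrightarrow> continuous_on {a..b} (Ig g a)"
  unfolding Ig_def[abs_def] by (rule indefinite_integral_continuous_1[OF ig_int])

lemma I_strict: "1 < a \<Longrightarrow> a \<le> b \<Longrightarrow> b < c \<Longrightarrow> Ig g a b < Ig g a c"
  using I_add[of a b c] I_pos[of b c] by auto

lemma W_ex1:
  assumes dv: "divg g" and x: "x > 1" and t: "t \<ge> 0"
  shows "\<exists>!y. x \<le> y \<and> ((\<lambda>u. 1 / g u) has_integral t) {x..y}"
proof -
  have hi: "((\<lambda>u. 1 / g u) has_integral t) {x..y} \<longleftrightarrow> Ig g x y = t" for y
    using I_has[OF x, of y] has_integral_unique by blast
  obtain Y where Y: "Y \<ge> x" "t \<le> Ig g x Y" using dv x unfolding divg_def by blast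
  have "Ig g x x = 0" by (simp add: Ig_def)
  then obtain y where y: "x \<le> y" "y \<le> Y" "Ig g x y = t"
    using IVT'[of "Ig g x" x t Y] Y t I_cont[OF x, of Y] by auto
  show ?thesis
  proof (rule ex1I[of _ y])
    show "x \<le> y \<and> ((\<lambda>u. 1 / g u) has_integral t) {x..y}" using y hi by auto
    fix z assume "x \<le> z \<and> ((\<lambda>u. 1 / g u) has_integral t) {x..z}"
    then have z: "x \<le> z" "Ig g x z = t" using hi by auto
    show "z = y"
    proof (rule ccontr)
      assume "z \<noteq> y"
      then have "z < y \<or> y < z" by auto
      then show False using I_strict[OF x z(1), of y] I_strict[OF x y(1), of z] z y by auto
    qed
  qed
qed

lemma W_props:
  assumes dv: "divg g" and x: "x > 1" and t: "t \<ge> 0"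
  shows "x \<le> wfun g x t" "Ig g x (wfun g x t) = t"
proof -
  have "x \<le> wfun g x t \<and> ((\<lambda>u. 1 / g u) has_integral t) {x..wfun g x t}"
    unfolding wfun_def using x theI'[OF W_ex1[OF assms]] by simp
  then show "x \<le> wfun g x t" "Ig g x (wfun g x t) = t"
    using I_has[OF x, of "wfun g x t"] has_integral_unique by blast+
qed

lemma W_eqI:
  assumes dv: "divg g" and x: "x > 1" and y: "x \<le> y" "Ig g x y = t"
  shows "wfun g x t = y"
proof -
  have t: "t \<ge> 0" using I_nonneg[OF x, of y] y by simp
  have "((\<lambda>u. 1 / g u) has_integral t) {x..y}" using I_has[OF x, of y] y by simp
  then show ?thesis
    unfolding wfun_def using x the1_equality[OF W_ex1[OF dv x t], of y] y by simp
qed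

lemma W_mono_t:
  assumes dv: "divg g" and x: "x > 1" and t: "0 \<le> t" "t \<le> t'"
  shows "wfun g x t \<le> wfun g x t'" "Ig g (wfun g x t) (wfun g x t') = t' - t"
proof -
  note p = W_props[OF dv x t(1)] and p' = W_props[OF dv x, of t'] 
  have p'': "x \<le> wfun g x t'" "Ig g x (wfun g x t') = t'" using p' t by auto
  show le: "wfun g x t \<le> wfun g x t'"
  proof (rule ccontr)
    assume "\<not> ?thesis"
    then have "Ig g x (wfun g x t') < Ig g x (wfun g x t)" by (intro I_strict[OF x p''(1)]) auto
    then show False using p p'' t by auto
  qed
  show "Ig g (wfun g x t) (wfun g x t') = t' - t"
    using I_add[OF x p(1) le] p p'' by simp
qed

lemma W_mono_x:
  assumes dv: "divg g" and x: "x > 1" "x \<le> y" and t: "0 \<le> t"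
  shows "wfun g x t \<le> wfun g y t" "Ig g x y = Ig g (wfun g x t) (wfun g y t)"
proof -
  have y1: "y > 1" using x by auto
  note p = W_props[OF dv x(1) t] and q = W_props[OF dv y1 t]
  show le: "wfun g x t \<le> wfun g y t"
  proof (rule ccontr)
    assume "\<not> ?thesis"
    then have lt: "wfun g y t < wfun g x t" by auto
    have "Ig g x (wfun g x t) = Ig g x y + Ig g y (wfun g y t) + Ig g (wfun g y t) (wfun g x t)"
      using I_add[OF x(1) x(2) q(1)] I_add[of x "wfun g y t" "wfun g x t"] x q(1) lt by auto
    moreover have "Ig g (wfun g y t) (wfun g x t) > 0" using I_pos[OF _ lt] q(1) y1 by auto
    moreover have "Ig g x y \<ge> 0" using I_nonneg[OF x(1)] .
    ultimately show False using p q by auto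
  qed
  have "Ig g x (wfun g y t) = Ig g x y + Ig g y (wfun g y t)" using I_add[OF x(1) x(2) q(1)] by simp
  moreover have "Ig g x (wfun g y t) = Ig g x (wfun g x t) + Ig g (wfun g x t) (wfun g y t)"
    using I_add[OF x(1) p(1) le] by simp
  ultimately show "Ig g x y = Ig g (wfun g x t) (wfun g y t)" using p q by simp
qed

lemma K2:
  assumes qm: "mono_on {1<..} (\<lambda>x. g x / x)" and ab: "1 < a" "a \<le> b"
  shows "g a / a * Ig g a b \<le> ln b - ln a" "ln b - ln a \<le> g b / b * Ig g a b"
proof -
  have L: "((\<lambda>u. 1 / u) has_integral (ln b - ln a)) {a..b}" by (rule ln_has_integral) (use ab in auto)
  have eq: "1 / u = (g u / u) * (1 / g u)" if "u \<in> {a..b}" for u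
    using gp[of u] that ab by auto
  have "((\<lambda>u. g a / a * (1 / g u)) has_integral (g a / a * Ig g a b)) {a..b}"
    by (rule has_integral_mult_right[OF I_has[OF ab(1)]])
  then show "g a / a * Ig g a b \<le> ln b - ln a"
  proof (rule has_integral_le[OF _ L])
    fix u assume u: "u \<in> {a..b}"
    have "g a / a \<le> g u / u" using mono_onD[OF qm, of a u] u ab by auto
    then have "g a / a * (1 / g u) \<le> g u / u * (1 / g u)" using gp[of u] u ab by (intro mult_right_mono) auto
    then show "g a / a * (1 / g u) \<le> 1 / u" using eq[OF u] by simp
  qed
  have "((\<lambda>u. g b / b * (1 / g u)) has_integral (g b / b * Ig g a b)) {a..b}"
    by (rule has_integral_mult_right[OF I_has[OF ab(1)]])
  with L show "ln b - ln a \<le> g b / b * Ig g a b"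
  proof (rule has_integral_le)
    fix u assume u: "u \<in> {a..b}"
    have "g u / u \<le> g b / b" using mono_onD[OF qm, of u b] u ab by auto
    then have "g u / u * (1 / g u) \<le> g b / b * (1 / g u)" using gp[of u] u ab by (intro mult_right_mono) auto
    then show "1 / u \<le> g b / b * (1 / g u)" using eq[OF u] by simp
  qed
qed

lemma K1:
  assumes X0: "X0 > 1" and D: "\<And>x. x \<ge> X0 \<Longrightarrow> (g has_real_derivative g' x) (at x)"
    and ab: "X0 \<le> a" "a \<le> b"
    and r: "\<And>u. u \<in> {a..b} \<Longrightarrow> c1 \<le> (u * g' u - g u) / u \<and> (u * g' u - g u) / u \<le> c2"
  shows "c1 * Ig g a b \<le> ln (g b / b) - ln (g a / a)" "ln (g b / b) - ln (g a / a) \<le> c2 * Ig g a b"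
proof -
  have a1: "a > 1" using X0 ab by auto
  define R where "R u = (u * g' u - g u) / u / g u" for u
  have FT: "(R has_integral (ln (g b / b) - ln (g a / a))) {a..b}"
  proof (rule fundamental_theorem_of_calculus[OF ab(2)])
    fix u assume u: "u \<in> {a..b}"
    then have u0: "u > 0" "g u > 0" "u \<ge> X0" using a1 gp[of u] ab by auto
    have "((\<lambda>u. ln (g u / u)) has_real_derivative (1 / (g u / u)) * ((g' u * u - g u * 1) / (u * u))) (at u)"
      by (rule DERIV_chain2[OF DERIV_ln_divide DERIV_divide[OF D[OF u0(3)] DERIV_ident]]) (use u0 in auto)
    moreover have "(1 / (g u / u)) * ((g' u * u - g u * 1) / (u * u)) = R u"
      using u0 by (simp add: R_def field_simps)
    ultimately show "((\<lambda>u. ln (g u / u)) has_vector_derivative R u) (at u within {a..b})"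
      by (auto simp: has_real_derivative_iff_has_vector_derivative[symmetric] intro!: has_field_derivative_at_within)
  qed
  have rr: "c1 * (1 / g u) \<le> R u \<and> R u \<le> c2 * (1 / g u)" if "u \<in> {a..b}" for u
  proof -
    have gu: "g u > 0" using gp[of u] that a1 by auto
    have "c1 / g u \<le> ((u * g' u - g u) / u) / g u"
      by (rule divide_right_mono) (use r[OF that] gu in auto)
    moreover have "((u * g' u - g u) / u) / g u \<le> c2 / g u"
      by (rule divide_right_mono) (use r[OF that] gu in auto)
    ultimately have "c1 / g u \<le> ((u * g' u - g u) / u) / g u \<and> ((u * g' u - g u) / u) / g u \<le> c2 / g u" by blast
    then show ?thesis unfolding R_def by (simp only: times_divide_eq_right mult_1_right)
  qed
  show "c1 * Ig g a b \<le> ln (g b / b) - ln (g a / a)"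
    by (rule has_integral_le[OF has_integral_mult_right[OF I_has[OF a1]] FT]) (use rr in auto)
  show "ln (g b / b) - ln (g a / a) \<le> c2 * Ig g a b"
    by (rule has_integral_le[OF FT has_integral_mult_right[OF I_has[OF a1]]]) (use rr in auto)
qed

end

lemma Phi_scale:
  assumes u: "u \<in> Delta" and k: "\<And>s. 0 \<le> s \<Longrightarrow> s \<le> 1 \<Longrightarrow> \<bar>k s\<bar> \<le> C * s"
  shows "Phi (\<lambda>s. c * k s) u = c * Phi k u"
  using Phi_lin[OF u k k, of c 0] by simp

lemma Phi_nonneg_lin:
  assumes u: "u \<in> Delta" and k: "\<And>s. 0 \<le> s \<Longrightarrow> s \<le> 1 \<Longrightarrow> \<bar>k s\<bar> \<le> C * s"
    and kn: "\<And>s. 0 \<le> s \<Longrightarrow> s \<le> 1 \<Longrightarrow> 0 \<le> k s" and C: "C \<ge> 0"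
  shows "0 \<le> Phi k u"
proof -
  have "Phi (\<lambda>_. 0) u \<le> Phi k u"
    by (rule Phi_mono[OF u _ k kn]) (use C in auto)
  then show ?thesis by (cases "u = (\<lambda>_. 0)") (auto simp: Phi_def)
qed

lemma f0_div_lim: "((\<lambda>x. f0 x s / x) \<longlongrightarrow> s) at_top" if s: "0 \<le> s" "s \<le> 1" for s :: real
proof -
  have b1: "- 1 \<le> pw (1 - s) x - 1" "pw (1 - s) x - 1 \<le> 1" if "x \<ge> 0" for x
    using pw_nonneg[of "1 - s" x] pw_le1[of "1 - s" x] s that by auto
  have l1: "((\<lambda>x. 1 / x :: real) \<longlongrightarrow> 0) at_top"
    using tendsto_inverse_0_at_top[OF filterlim_ident] by (simp add: inverse_eq_divide)
  have "((\<lambda>x. (pw (1 - s) x - 1) / x) \<longlongrightarrow> 0) at_top"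
  proof (rule tendsto_sandwich[of "\<lambda>x. - (1 / x)" _ _ "\<lambda>x. 1 / x"])
    show "\<forall>\<^sub>F x in at_top. - (1 / x) \<le> (pw (1 - s) x - 1) / x"
      using eventually_gt_at_top[of 0]
    proof eventually_elim
      case (elim x)
      have "(- 1) / x \<le> (pw (1 - s) x - 1) / x" by (intro divide_right_mono b1) (use elim in auto)
      then show ?case by simp
    qed
    show "\<forall>\<^sub>F x in at_top. (pw (1 - s) x - 1) / x \<le> 1 / x"
      using eventually_gt_at_top[of 0]
    proof eventually_elim
      case (elim x) then show ?case by (intro divide_right_mono b1) auto
    qed
    show "((\<lambda>x::real. - (1 / x)) \<longlongrightarrow> 0) at_top" using tendsto_minus[OF l1] by simp
    show "((\<lambda>x. 1 / x :: real) \<longlongrightarrow> 0) at_top" by (rule l1)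
  qed
  then have "((\<lambda>x. (pw (1 - s) x - 1) / x + s) \<longlongrightarrow> 0 + s) at_top" by (intro tendsto_add) auto
  moreover have "\<forall>\<^sub>F x in at_top. (pw (1 - s) x - 1) / x + s = f0 x s / x"
    using eventually_gt_at_top[of 0]
  proof eventually_elim
    case (elim x)
    have "f0 x s / x = (pw (1 - s) x - 1 + x * s) / x" by (simp add: f0_def)
    also have "\<dots> = (pw (1 - s) x - 1) / x + x * s / x" by (rule add_divide_distrib)
    also have "x * s / x = s" using elim by simp
    finally show ?case by simp
  qed
  ultimately show ?thesis by (simp add: tendsto_cong)
qed

lemma Phi_f0_lim:
  assumes u: "u \<in> Delta"
  shows "((\<lambda>x. Phi (f0 x) u / x) \<longlongrightarrow> Phi (\<lambda>s. s) u) at_top"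
proof (cases "u = (\<lambda>_. 0)")
  case True then show ?thesis by (simp add: Phi_def)
next
  case False
  have T: "((\<lambda>x. \<Sum>k. f0 x (u k) / x) \<longlongrightarrow> (\<Sum>k. u k)) at_top"
  proof (rule tannerys_theorem[where M=u, THEN conjunct2, THEN conjunct2])
    show "((\<lambda>x. f0 x (u k) / x) \<longlongrightarrow> u k) at_top" for k
      by (rule f0_div_lim) (use Delta_D[OF u] in auto)
    have "\<forall>\<^sub>F x in at_top. \<forall>k. norm (f0 x (u k) / x) \<le> u k"
      using eventually_ge_at_top[of 1]
    proof eventually_elim
      case (elim x)
      show ?case
      proof
        fix k
        have "0 \<le> f0 x (u k)" "f0 x (u k) \<le> x * u k"
          using f0_nonneg[of "u k" x] f0_le_lin[of "u k" x] Delta_D[OF u] elim by auto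
        then show "norm (f0 x (u k) / x) \<le> u k" using elim by (simp add: divide_le_eq mult.commute)
      qed
    qed
    then have "\<forall>\<^sub>F (k, x) in (at_top::nat filter) \<times>\<^sub>F at_top. \<forall>k'. norm (f0 x (u k') / x) \<le> u k'"
      using eventually_prod2[where A="at_top::nat filter" and B=at_top and P="\<lambda>x. \<forall>k'. norm (f0 x (u k') / x) \<le> u k'"] by simp
    then show "\<forall>\<^sub>F (k, x) in at_top \<times>\<^sub>F at_top. norm (f0 x (u k) / x) \<le> u k"
      by (rule eventually_mono) auto
    show "summable u" by (rule Delta_D(3)[OF u])
  qed simp
  then have "((\<lambda>x. (\<Sum>k. f0 x (u k) / x) / sip u) \<longlongrightarrow> (\<Sum>k. u k) / sip u) at_top"
    by (rule tendsto_divide[OF _ tendsto_const]) (use sip_pos[OF u False] in auto)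
  moreover have "\<forall>\<^sub>F x in at_top. (\<Sum>k. f0 x (u k) / x) / sip u = Phi (f0 x) u / x"
    using eventually_ge_at_top[of 1]
  proof eventually_elim
    case (elim x)
    have "summable (\<lambda>k. f0 x (u k))"
      by (rule series_summable_lin[OF u, of _ "x^2"]) (use f0_lin elim in auto)
    then show ?case using False by (simp add: Phi_def suminf_divide)
  qed
  moreover have "(\<Sum>k. u k) / sip u = Phi (\<lambda>s. s) u" using False by (simp add: Phi_def)
  ultimately show ?thesis using tendsto_cong by force
qed

lemma zero_set_borel: "{u::nat \<Rightarrow> real. \<forall>i. u i = 0} \<in> sets borel"
  by measurable

context
  fixes Xi :: "(nat \<Rightarrow> real) measure"
  assumes fin: "finite_measure Xi"
    and sets: "sets Xi = sets (restrict_space borel Delta)"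
begin

interpretation finite_measure Xi by (rule fin)

lemma zero_in_Delta: "(\<lambda>_. 0::real) \<in> Delta"
  by (simp add: Delta_def)

lemma zero_sets: "{\<lambda>_. 0::real} \<in> sets Xi"
proof -
  have "{\<lambda>_. 0::real} = Delta \<inter> {u::nat \<Rightarrow> real. \<forall>i. u i = 0}" using zero_in_Delta by auto
  then have "{\<lambda>_. 0::real} \<in> sets (restrict_space borel Delta)"
    unfolding sets_restrict_space using zero_set_borel by auto
  then show ?thesis using sets by simp
qed

lemma gamma_pos:
  assumes nz: "emeasure Xi Delta \<noteq> 0" and x: "x > 1"
  shows "gamma Xi x > 0"
proof -
  have i0: "integrable Xi (Phi (f0 x))" by (rule Phi_integrable[OF fin sets, of _ "x^2"]) (use f0_abs x in auto)
  have nn: "\<And>u. u \<in> space Xi \<Longrightarrow> 0 \<le> Phi (f0 x) u"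
    using Phi_nonneg[of _ "f0 x" "x^2"] f0_abs[of _ x] f0_nonneg[of _ x] x space_Xi[OF fin sets] by auto
  have G0: "G Xi f0 x \<ge> 0" unfolding G_def[OF fin sets] by (rule integral_nonneg_AE) (use nn in auto)
  show ?thesis
  proof (cases "atom0 Xi = 0")
    case False
    then have "atom0 Xi > 0" using atom0_nonneg[OF fin sets] by auto
    then have "atom0 Xi * x * (x - 1) / 2 > 0" using x by simp
    then show ?thesis using G0 gamma_eq[OF fin sets] by simp
  next
    case True
    have "{\<lambda>_. 0::real} \<in> null_sets Xi"
      using True zero_sets by (simp add: atom0_def emeasure_eq_measure null_sets_def)
    then have ae0: "AE u in Xi. u \<noteq> (\<lambda>_. 0)" using AE_not_in by fastforce
    have "G Xi f0 x > 0"
    proof (rule ccontr)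
      assume "\<not> G Xi f0 x > 0"
      then have "(\<integral>u. Phi (f0 x) u \<partial>Xi) = 0" using G0 unfolding G_def[OF fin sets] by simp
      then have "AE u in Xi. Phi (f0 x) u = 0"
        using integral_nonneg_eq_0_iff_AE[OF i0] nn by auto
      moreover have "AE u in Xi. Phi (f0 x) u > 0"
        using ae0 AE_space
      proof eventually_elim
        case (elim u)
        then have u: "u \<in> Delta" using space_Xi[OF fin sets] by simp
        show ?case
          by (rule Phi_pos[OF u elim(1), of _ "x^2"]) (use f0_abs f0_nonneg f0_pos x in auto)
      qed
      ultimately have "AE u in Xi. False" by eventually_elim auto
      then have "emeasure Xi (space Xi) = 0"
        using ae_filter_eq_bot_iff trivial_limit_def by metis
      then show False using nz space_Xi[OF fin sets] by simp
    qed
    then show ?thesis using True gamma_eq[OF fin sets] by simp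
  qed
qed

lemma gamma_cont: "continuous_on {1<..} (gamma Xi)"
  by (intro continuous_at_imp_continuous_on ballI DERIV_isCont[OF gamma_deriv[OF fin sets]]) auto

lemma q_deriv: "x > 1 \<Longrightarrow> ((\<lambda>x. gamma Xi x / x) has_real_derivative (D1 Xi x * x - gamma Xi x * 1) / (x * x)) (at x)"
  by (rule DERIV_divide[OF gamma_deriv[OF fin sets] DERIV_ident]) auto

lemma q_mono: "mono_on {1<..} (\<lambda>x. gamma Xi x / x)"
proof (rule mono_onI)
  fix x y :: real assume xy: "x \<in> {1<..}" "y \<in> {1<..}" "x \<le> y"
  show "gamma Xi x / x \<le> gamma Xi y / y"
  proof (rule DERIV_nonneg_imp_nondecreasing[OF xy(3)])
    fix z assume z: "x \<le> z" "z \<le> y"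
    then have z1: "z > 1" using xy by auto
    have "0 \<le> (D1 Xi z * z - gamma Xi z * 1) / (z * z)"
      using H_nonneg[OF fin sets z1] z1 by (simp add: mult.commute)
    then show "\<exists>d. ((\<lambda>x. gamma Xi x / x) has_real_derivative d) (at z) \<and> 0 \<le> d"
      using q_deriv[OF z1] by blast
  qed
qed

lemma mu_eq: "mu Xi = (\<integral>\<^sup>+u. ennreal (Phi (\<lambda>s. s) u) \<partial>Xi)"
  unfolding mu_def sabs_def Phi_def by simp

lemma q_lim:
  assumes a0: "atom0 Xi = 0" and mu: "mu Xi < \<infinity>"
  shows "((\<lambda>x. gamma Xi x / x) \<longlongrightarrow> enn2real (mu Xi)) at_top"
proof -
  have sp: "space Xi = Delta" by (rule space_Xi[OF fin sets])
  have m: "Phi (\<lambda>s. s) \<in> borel_measurable Xi" by (rule Phi_meas_Xi[OF fin sets]) simp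
  have nn: "\<And>u. u \<in> Delta \<Longrightarrow> 0 \<le> Phi (\<lambda>s. s) u"
    by (rule Phi_nonneg_lin[of _ _ 1]) simp_all
  have int: "integrable Xi (Phi (\<lambda>s. s))"
    by (rule integrableI_nonneg[OF m]) (use nn sp mu mu_eq in auto)
  have ae: "AE u in Xi. 0 \<le> Phi (\<lambda>s. s) u" using nn sp by auto
  have mueq: "enn2real (mu Xi) = (\<integral>u. Phi (\<lambda>s. s) u \<partial>Xi)"
    using integral_eq_nn_integral[OF m ae] mu_eq by simp
  have "((\<lambda>x. \<integral>u. Phi (f0 x) u / x \<partial>Xi) \<longlongrightarrow> (\<integral>u. Phi (\<lambda>s. s) u \<partial>Xi)) at_top"
  proof (rule integral_dominated_convergence_at_top[where w="Phi (\<lambda>s. s)"])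
    show "Phi (\<lambda>s. s) \<in> borel_measurable Xi" by fact
    show "(\<lambda>u. Phi (f0 x) u / x) \<in> borel_measurable Xi" for x
      using Phi_meas_Xi[OF fin sets, of "f0 x"] by simp
    show "integrable Xi (Phi (\<lambda>s. s))" by fact
    show "AE u in Xi. ((\<lambda>x. Phi (f0 x) u / x) \<longlongrightarrow> Phi (\<lambda>s. s) u) at_top"
      using Phi_f0_lim sp by auto
    show "\<forall>\<^sub>F x in at_top. AE u in Xi. norm (Phi (f0 x) u / x) \<le> Phi (\<lambda>s. s) u"
      using eventually_ge_at_top[of 1]
    proof eventually_elim
      case (elim x)
      show ?case
      proof (rule AE_I2)
        fix u assume "u \<in> space Xi"
        then have u: "u \<in> Delta" using sp by simp
        have p0: "0 \<le> Phi (f0 x) u"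
          by (rule Phi_nonneg_lin[OF u, of _ "x^2"]) (use f0_lin f0_nonneg elim in simp_all)
        have xs: "x * s \<le> x^2 * s" if "0 \<le> s" for s
          using mult_right_mono[of x "x^2" s] elim that by (simp add: power2_eq_square)
        have "Phi (f0 x) u \<le> Phi (\<lambda>s. x * s) u"
        proof (rule Phi_mono[OF u, of _ "x^2"])
          fix s :: real assume s: "0 \<le> s" "s \<le> 1"
          show "\<bar>f0 x s\<bar> \<le> x^2 * s" using f0_lin s elim by simp
          show "\<bar>x * s\<bar> \<le> x^2 * s" using xs[OF s(1)] s elim by simp
          show "f0 x s \<le> x * s" using f0_le_lin s elim by simp
        qed
        also have "\<dots> = x * Phi (\<lambda>s. s) u" by (rule Phi_scale[OF u, of _ 1]) auto
        finally show "norm (Phi (f0 x) u / x) \<le> Phi (\<lambda>s. s) u"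
          using p0 elim by (simp add: divide_le_eq mult.commute)
      qed
    qed
  qed
  moreover have ev: "\<forall>\<^sub>F x in at_top. (\<integral>u. Phi (f0 x) u / x \<partial>Xi) = gamma Xi x / x"
    using eventually_gt_at_top[of 0]
  proof eventually_elim
    case (elim x) then show ?case using gamma_eq[OF fin sets, of x] a0 by (simp add: G_def[OF fin sets])
  qed
  ultimately have "((\<lambda>x. gamma Xi x / x) \<longlongrightarrow> (\<integral>u. Phi (\<lambda>s. s) u \<partial>Xi)) at_top"
    using tendsto_cong[OF ev] by simp
  then show ?thesis using mueq by simp
qed

end

lemma q_le_lim:
  assumes qm: "mono_on {1<..} (\<lambda>x. g x / x)" and ql: "((\<lambda>x. g x / x) \<longlongrightarrow> \<mu>) at_top" and x: "x > 1"
  shows "g x / x \<le> (\<mu>::real)"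
proof (rule tendsto_lowerbound[OF ql])
  show "\<forall>\<^sub>F y in at_top. g x / x \<le> g y / y"
    using eventually_ge_at_top[of x] by eventually_elim (use mono_onD[OF qm] x in auto)
qed simp

lemma part1_abstract:
  fixes g :: "real \<Rightarrow> real" and \<mu> t :: real
  assumes gc: "continuous_on {1<..} g" and gp: "\<And>x. x > 1 \<Longrightarrow> g x > 0"
    and qm: "mono_on {1<..} (\<lambda>x. g x / x)" and ql: "((\<lambda>x. g x / x) \<longlongrightarrow> \<mu>) at_top" and t: "t \<ge> 0"
  shows "(\<lambda>x. wfun g x t) \<sim>[at_top] (\<lambda>x. x * exp (\<mu> * t))"
proof -
  have qle: "\<And>x. x > 1 \<Longrightarrow> g x / x \<le> \<mu>" using q_le_lim[OF qm ql] .
  have mupos: "\<mu> > 0" using qle[of 2] gp[of 2] by simp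
  have dv: "divg g" unfolding divg_def
  proof (intro allI impI)
    fix x T :: real assume x: "x > 1"
    define y where "y = x * exp (\<mu> * max T 0)"
    have xy: "x \<le> y" using x mupos by (simp add: y_def)
    have "ln y - ln x \<le> g y / y * Ig g x y" using K2(2)[OF gc gp qm x xy] .
    also have "\<dots> \<le> \<mu> * Ig g x y"
      using qle[of y] xy x I_nonneg[OF gc gp x, of y] by (intro mult_right_mono) auto
    finally have "\<mu> * max T 0 \<le> \<mu> * Ig g x y" using x mupos by (simp add: y_def ln_mult)
    then have "max T 0 \<le> Ig g x y" using mupos by simp
    then show "\<exists>y\<ge>x. T \<le> Ig g x y" using xy by (intro exI[of _ y]) auto
  qed
  define E where "E x = ln (wfun g x t) - ln x - \<mu> * t" for x
  have bnd: "(g x / x - \<mu>) * t \<le> E x \<and> E x \<le> 0" if x: "x > 1" for x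
  proof -
    note W = W_props[OF gc gp dv x t]
    have "g x / x * t \<le> ln (wfun g x t) - ln x" using K2(1)[OF gc gp qm x W(1)] W(2) by simp
    moreover have "ln (wfun g x t) - ln x \<le> g (wfun g x t) / wfun g x t * t" using K2(2)[OF gc gp qm x W(1)] W(2) by simp
    moreover have "g (wfun g x t) / wfun g x t * t \<le> \<mu> * t"
      using qle[of "wfun g x t"] W(1) x t by (intro mult_right_mono) auto
    ultimately show ?thesis unfolding E_def by (simp add: algebra_simps)
  qed
  have "(E \<longlongrightarrow> 0) at_top"
  proof (rule tendsto_sandwich[of "\<lambda>x. (g x / x - \<mu>) * t" _ _ "\<lambda>_. 0"])
    show "\<forall>\<^sub>F x in at_top. (g x / x - \<mu>) * t \<le> E x"
      using eventually_gt_at_top[of 1] by eventually_elim (use bnd in auto)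
    show "\<forall>\<^sub>F x in at_top. E x \<le> 0"
      using eventually_gt_at_top[of 1] by eventually_elim (use bnd in auto)
    have "((\<lambda>x. (g x / x - \<mu>) * t) \<longlongrightarrow> (\<mu> - \<mu>) * t) at_top"
      by (intro tendsto_intros ql)
    then show "((\<lambda>x. (g x / x - \<mu>) * t) \<longlongrightarrow> 0) at_top" by simp
  qed simp
  then have "((\<lambda>x. exp (E x)) \<longlongrightarrow> exp 0) at_top" by (rule tendsto_exp)
  moreover have "\<forall>\<^sub>F x in at_top. exp (E x) = wfun g x t / (x * exp (\<mu> * t))"
    using eventually_gt_at_top[of 1]
  proof eventually_elim
    case (elim x)
    have "wfun g x t > 0" using W_props(1)[OF gc gp dv elim t] elim by simp
    then show ?case using elim by (simp add: E_def exp_diff)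
  qed
  ultimately have "((\<lambda>x. wfun g x t / (x * exp (\<mu> * t))) \<longlongrightarrow> 1) at_top"
    using tendsto_cong by force
  then show ?thesis by (rule asymp_equivI')
qed


lemma exp_near1:
  fixes \<eta> :: real
  assumes "\<eta> > 0"
  obtains \<sigma> where "\<sigma> > 0" "\<And>z. \<bar>z\<bar> < \<sigma> \<Longrightarrow> \<bar>exp z - 1\<bar> < \<eta>"
proof -
  have "(exp \<longlongrightarrow> exp 0) (at (0::real))" by (intro tendsto_intros)
  then have "\<exists>s>0. \<forall>x::real. x \<noteq> 0 \<and> norm (x - 0) < s \<longrightarrow> norm (exp x - 1) < \<eta>"
    using assms unfolding LIM_eq by simp
  then obtain s where s: "s > 0" "\<And>x::real. x \<noteq> 0 \<Longrightarrow> \<bar>x\<bar> < s \<Longrightarrow> \<bar>exp x - 1\<bar> < \<eta>" by auto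
  show ?thesis
  proof (rule that[OF s(1)])
    fix z :: real assume "\<bar>z\<bar> < s"
    then show "\<bar>exp z - 1\<bar> < \<eta>" using s(2)[of z] assms by (cases "z = 0") auto
  qed
qed

locale flowB =
  fixes g g' :: "real \<Rightarrow> real" and \<kappa> X0 :: real
  assumes gc: "continuous_on {1<..} g" and gp: "\<And>x. x > 1 \<Longrightarrow> g x > 0"
    and qm: "mono_on {1<..} (\<lambda>x. g x / x)"
    and X0: "X0 > 1"
    and D: "\<And>x. x \<ge> X0 \<Longrightarrow> (g has_real_derivative g' x) (at x)"
    and rnn: "\<And>x. x \<ge> X0 \<Longrightarrow> 0 \<le> x * g' x - g x"
    and rlim: "((\<lambda>x. (x * g' x - g x) / x) \<longlongrightarrow> \<kappa>) at_top"
begin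

abbreviation q where "q x \<equiv> g x / x"

lemma q_pos: "x > 1 \<Longrightarrow> q x > 0" using gp by simp

lemma q_ge2: "x \<ge> 2 \<Longrightarrow> q 2 \<le> q x" using mono_onD[OF qm, of 2 x] by auto

lemma kappa_nonneg: "\<kappa> \<ge> 0"
proof (rule tendsto_lowerbound[OF rlim])
  show "\<forall>\<^sub>F x in at_top. 0 \<le> (x * g' x - g x) / x"
    using eventually_ge_at_top[of X0] by eventually_elim (use rnn X0 in auto)
qed simp

lemma r_ev:
  assumes "\<epsilon> > 0"
  obtains X where "X \<ge> X0" "\<And>u. u \<ge> X \<Longrightarrow> \<bar>(u * g' u - g u) / u - \<kappa>\<bar> \<le> \<epsilon>"
proof -
  have "\<forall>\<^sub>F u in at_top. dist ((u * g' u - g u) / u) \<kappa> < \<epsilon>"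
    using rlim assms by (rule tendstoD)
  then obtain X where "\<And>u. u \<ge> X \<Longrightarrow> dist ((u * g' u - g u) / u) \<kappa> < \<epsilon>"
    by (auto simp: eventually_at_top_linorder)
  then have "\<bar>(u * g' u - g u) / u - \<kappa>\<bar> \<le> \<epsilon>" if "u \<ge> max X X0" for u
    using that by (simp add: dist_real_def less_imp_le)
  then show ?thesis by (intro that[of "max X X0"]) auto
qed

lemma K1e:
  assumes X: "X \<ge> X0" "\<And>u. u \<ge> X \<Longrightarrow> \<bar>(u * g' u - g u) / u - \<kappa>\<bar> \<le> \<epsilon>"
    and ab: "X \<le> a" "a \<le> b"
  shows "(\<kappa> - \<epsilon>) * Ig g a b \<le> ln (q b) - ln (q a)" "ln (q b) - ln (q a) \<le> (\<kappa> + \<epsilon>) * Ig g a b"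
proof -
  have r: "\<kappa> - \<epsilon> \<le> (u * g' u - g u) / u \<and> (u * g' u - g u) / u \<le> \<kappa> + \<epsilon>" if "u \<in> {a..b}" for u
    using X(2)[of u] that ab by (auto simp: abs_le_iff)
  show "(\<kappa> - \<epsilon>) * Ig g a b \<le> ln (q b) - ln (q a)" "ln (q b) - ln (q a) \<le> (\<kappa> + \<epsilon>) * Ig g a b"
    using K1[OF gc gp X0 D _ _ r, of a b] X ab by auto
qed

lemma K1z:
  assumes ab: "X0 \<le> a" "a \<le> b"
  shows "0 \<le> ln (q b) - ln (q a)"
proof -
  have "q a \<le> q b" using mono_onD[OF qm, of a b] ab X0 by auto
  moreover have "q a > 0" using ab X0 q_pos by auto
  ultimately show ?thesis by simp
qed

lemma divg: "divg g"
  unfolding divg_def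
proof (intro allI impI)
  fix x T :: real assume x: "x > 1"
  show "\<exists>y\<ge>x. T \<le> Ig g x y"
  proof (rule ccontr)
    assume na: "\<not> ?thesis"
    then have lt: "\<And>y. y \<ge> x \<Longrightarrow> Ig g x y < T" by force
    have T0: "T > 0" using lt[of x] by (simp add: Ig_def)
    obtain X where X: "X \<ge> X0" "\<And>u. u \<ge> X \<Longrightarrow> \<bar>(u * g' u - g u) / u - \<kappa>\<bar> \<le> 1"
      using r_ev[of 1] by auto
    define X1 where "X1 = max X x"
    have X1: "X1 \<ge> X" "X1 \<ge> x" "X1 > 1" using X0 X x by (auto simp: X1_def)
    define C where "C = q X1 * exp ((\<kappa> + 1) * T)"
    have Ib: "Ig g X1 y \<le> T" if "y \<ge> X1" for y
    proof -
      have "Ig g x X1 + Ig g X1 y = Ig g x y" by (rule I_add[OF gc gp x X1(2) that])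
      moreover have "Ig g x X1 \<ge> 0" by (rule I_nonneg[OF gc gp x])
      ultimately show ?thesis using lt[of y] that X1 by auto
    qed
    have qb: "q y \<le> C" if y: "y \<ge> X1" for y
    proof -
      have "ln (q y) - ln (q X1) \<le> (\<kappa> + 1) * Ig g X1 y" using K1e(2)[OF X X1(1) y] .
      also have "\<dots> \<le> (\<kappa> + 1) * T" using Ib[OF y] kappa_nonneg by (intro mult_left_mono) auto
      finally have "ln (q y) \<le> ln (q X1) + (\<kappa> + 1) * T" by simp
      then have "exp (ln (q y)) \<le> exp (ln (q X1) + (\<kappa> + 1) * T)" by simp
      then show ?thesis using q_pos[of y] q_pos[of X1] y X1 by (simp add: C_def exp_add)
    qed
    have Cp: "C > 0" using gp[of X1] X1 by (simp add: C_def)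
    define y where "y = X1 * exp (C * T + 1)"
    have y: "y \<ge> X1" using X1 Cp T0 by (simp add: y_def)
    have "ln y - ln X1 \<le> q y * Ig g X1 y" using K2(2)[OF gc gp qm X1(3) y] .
    also have "\<dots> \<le> C * T"
    proof (rule mult_mono)
      show "0 \<le> Ig g X1 y" by (rule I_nonneg[OF gc gp X1(3)])
    qed (use qb[OF y] Ib[OF y] Cp in auto)
    finally have "C * T + 1 \<le> C * T" using X1 by (simp add: y_def ln_mult)
    then show False by simp
  qed
qed

lemma I_unbounded: "x > 1 \<Longrightarrow> \<exists>Y\<ge>x. \<forall>y\<ge>Y. T \<le> Ig g x y"
proof -
  assume x: "x > 1"
  obtain Y where Y: "Y \<ge> x" "T \<le> Ig g x Y" using divg x unfolding divg_def by blast
  have "T \<le> Ig g x y" if "y \<ge> Y" for y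
    using I_add[OF gc gp x Y(1) that] I_nonneg[OF gc gp, of Y y] Y x by auto
  then show ?thesis using Y by auto
qed

lemma q_growth:
  assumes X: "X \<ge> X0" "\<And>u. u \<ge> X \<Longrightarrow> \<bar>(u * g' u - g u) / u - \<kappa>\<bar> \<le> 1"
    and a: "a \<ge> X" and t: "t \<ge> 0"
  shows "q (wfun g a t) \<le> q a * exp ((\<kappa> + 1) * t)"
proof -
  have a1: "a > 1" using a X X0 by auto
  note W = W_props[OF gc gp divg a1 t]
  have "ln (q (wfun g a t)) - ln (q a) \<le> (\<kappa> + 1) * t" using K1e(2)[OF X a W(1)] W(2) by simp
  then have "exp (ln (q (wfun g a t))) \<le> exp (ln (q a) + (\<kappa> + 1) * t)" by simp
  then show ?thesis using q_pos[of a] q_pos[of "wfun g a t"] a1 W(1) by (simp add: exp_add)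
qed

lemma kq: "((\<lambda>x. \<kappa> / q x) \<longlongrightarrow> 0) at_top"
proof (cases "\<kappa> = 0")
  case True then show ?thesis by simp
next
  case False
  then have kp: "\<kappa> > 0" using kappa_nonneg by simp
  obtain X where X: "X \<ge> X0" "\<And>u. u \<ge> X \<Longrightarrow> \<bar>(u * g' u - g u) / u - \<kappa>\<bar> \<le> \<kappa> / 2"
    using r_ev[of "\<kappa> / 2"] kp by auto
  have X1: "X > 1" using X X0 by auto
  have "filterlim q at_top at_top"
    unfolding filterlim_at_top
  proof
    fix Z :: real
    obtain Y where Y: "Y \<ge> X" "\<And>y. y \<ge> Y \<Longrightarrow> (2 / \<kappa>) * \<bar>ln (max Z 1) - ln (q X)\<bar> \<le> Ig g X y"
      using I_unbounded[OF X1] by blast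
    show "\<forall>\<^sub>F y in at_top. Z \<le> q y"
      using eventually_ge_at_top[of Y]
    proof eventually_elim
      case (elim y)
      have "(\<kappa> - \<kappa> / 2) * Ig g X y \<le> ln (q y) - ln (q X)" using K1e(1)[OF X order_refl] Y elim by auto
      moreover have "(\<kappa> / 2) * ((2 / \<kappa>) * \<bar>ln (max Z 1) - ln (q X)\<bar>) \<le> (\<kappa> / 2) * Ig g X y"
        using Y(2)[OF elim] kp by (intro mult_left_mono) auto
      moreover have "(\<kappa> / 2) * ((2 / \<kappa>) * \<bar>ln (max Z 1) - ln (q X)\<bar>) = \<bar>ln (max Z 1) - ln (q X)\<bar>"
        using kp by simp
      moreover have "(\<kappa> - \<kappa> / 2) * Ig g X y = \<kappa> / 2 * Ig g X y" by simp
      moreover have "ln (max Z 1) - ln (q X) \<le> \<bar>ln (max Z 1) - ln (q X)\<bar>" by simp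
      ultimately have "ln (max Z 1) \<le> ln (q y)" by linarith
      then have "max Z 1 \<le> q y" using q_pos[of y] Y elim X1 by (subst (asm) ln_le_cancel_iff) auto
      then show ?case by simp
    qed
  qed
  then show ?thesis by (intro tendsto_divide_0[OF tendsto_const] filterlim_at_top_imp_at_infinity)
qed

end


lemma aux_cancel: "(K::real) \<noteq> 0 \<Longrightarrow> K * (a / (b * K)) = a / b"
  by (cases "b = 0") (simp_all add: field_simps)

context flowB
begin

lemma part3_div:
  fixes g1 :: "real \<Rightarrow> real"
  assumes g1c: "continuous_on {1<..} g1" and g1p: "\<And>x. x > 1 \<Longrightarrow> g1 x > 0"
    and lim: "((\<lambda>x. (g x - g1 x) / x) \<longlongrightarrow> 0) at_top"
  shows "divg g1"
  unfolding divg_def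
proof (intro allI impI)
  fix x T :: real assume x: "x > 1"
  define c where "c = q 2"
  have c: "c > 0" using q_pos[of 2] by (simp add: c_def)
  have "\<forall>\<^sub>F u in at_top. dist ((g u - g1 u) / u) 0 < c" by (rule tendstoD[OF lim c])
  then obtain X' where X': "\<And>u. u \<ge> X' \<Longrightarrow> \<bar>(g u - g1 u) / u\<bar> < c"
    by (auto simp: eventually_at_top_linorder)
  define X1 where "X1 = max (max X' x) 2"
  have X1: "X1 \<ge> X'" "X1 \<ge> x" "X1 \<ge> 2" "X1 > 1" by (auto simp: X1_def)
  have cmp: "1 / 2 * (1 / g u) \<le> 1 / g1 u" if u: "u \<in> {X1..Y}" for u Y
  proof -
    have u1: "u > 1" "u \<ge> 2" "u \<ge> X'" using u X1 by auto
    have "\<bar>(g u - g1 u) / u\<bar> < c" using X'[OF u1(3)] .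
    then have "g1 u - g u < c * u" using u1 by (simp add: abs_less_iff field_simps)
    moreover have "c * u \<le> q u * u" unfolding c_def by (rule mult_right_mono[OF q_ge2[OF u1(2)]]) (use u1 in auto)
    moreover have "q u * u = g u" using u1 by simp
    ultimately have "g1 u \<le> 2 * g u" by linarith
    then show ?thesis using g1p[OF u1(1)] gp[OF u1(1)] by (simp add: field_simps)
  qed
  obtain Y where Y: "Y \<ge> X1" "\<And>y. y \<ge> Y \<Longrightarrow> 2 * max T 0 \<le> Ig g X1 y"
    using I_unbounded[OF X1(4)] by blast
  have "1 / 2 * Ig g X1 Y \<le> Ig g1 X1 Y"
    by (rule has_integral_le[OF has_integral_mult_right[OF I_has[OF gc gp X1(4)]] I_has[OF g1c g1p X1(4)]])
       (use cmp in auto)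
  moreover have "Ig g1 x X1 + Ig g1 X1 Y = Ig g1 x Y" by (rule I_add[OF g1c g1p x X1(2) Y(1)])
  moreover have "Ig g1 x X1 \<ge> 0" by (rule I_nonneg[OF g1c g1p x])
  ultimately have "T \<le> Ig g1 x Y" using Y(2)[of Y] by auto
  then show "\<exists>y\<ge>x. T \<le> Ig g1 x y" using Y X1 by (intro exI[of _ Y]) auto
qed

lemma part3_equiv:
  fixes g1 :: "real \<Rightarrow> real"
  assumes g1c: "continuous_on {1<..} g1" and g1p: "\<And>x. x > 1 \<Longrightarrow> g1 x > 0"
    and lim: "((\<lambda>x. (g x - g1 x) / x) \<longlongrightarrow> 0) at_top" and t: "t \<ge> 0"
  shows "(\<lambda>x. wfun g x t) \<sim>[at_top] (\<lambda>x. wfun g1 x t)"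
proof -
  have dv1: "divg g1" by (rule part3_div[OF g1c g1p lim])
  have Dl: "((\<lambda>x. ln (wfun g x t) - ln (wfun g1 x t)) \<longlongrightarrow> 0) at_top"
    unfolding tendsto_iff
  proof (intro allI impI)
    fix \<eta> :: real assume eta: "\<eta> > 0"
    obtain X where X: "X \<ge> X0" "\<And>u. u \<ge> X \<Longrightarrow> \<bar>(u * g' u - g u) / u - \<kappa>\<bar> \<le> 1"
      using r_ev[of 1] by auto
    define K where "K = exp ((\<kappa> + 1) * (t + 1))"
    have K: "K > 0" by (simp add: K_def)
    define e where "e = min (q 2 / (t + 1)) (\<eta> / (2 * (t + 1) * K))"
    have e: "e > 0" using q_pos[of 2] t eta K by (simp add: e_def)
    have e1: "e \<le> q 2 / (t + 1)" and e2: "e \<le> \<eta> / (2 * (t + 1) * K)" by (simp_all add: e_def)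
    have "\<forall>\<^sub>F u in at_top. dist ((g u - g1 u) / u) 0 < e" by (rule tendstoD[OF lim e])
    then obtain X' where X': "\<And>u. u \<ge> X' \<Longrightarrow> \<bar>(g u - g1 u) / u\<bar> < e"
      by (auto simp: eventually_at_top_linorder)
    show "\<forall>\<^sub>F x in at_top. dist (ln (wfun g x t) - ln (wfun g1 x t)) 0 < \<eta>"
      using eventually_ge_at_top[of "max (max X X') 2"]
    proof eventually_elim
      case (elim x)
      have x: "x \<ge> X" "x \<ge> X'" "x \<ge> 2" "x > 1" using elim by auto
      have qx: "q x > 0" "q 2 \<le> q x" using q_pos[of x] q_ge2[of x] x by auto
      note p1 = W_props[OF g1c g1p dv1 x(4) t]
      define W1 where "W1 = wfun g1 x t"
      define S where "S = Ig g x W1"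
      have pw: "(1 - e / q x) * (1 / g1 u) \<le> 1 / g u \<and> 1 / g u \<le> (1 + e / q x) * (1 / g1 u)"
        if u: "u \<in> {x..W1}" for u
      proof -
        have u1: "u > 1" "u \<ge> X'" "u \<ge> x" using u x by auto
        have gu: "g u > 0" "g1 u > 0" using gp[OF u1(1)] g1p[OF u1(1)] by auto
        have qu: "q x \<le> q u" using mono_onD[OF qm, of x u] u1 x by auto
        have "\<bar>g u - g1 u\<bar> \<le> e * u" using X'[OF u1(2)] u1 by (simp add: abs_divide divide_less_eq)
        then have d: "\<bar>g u - g1 u\<bar> / (g u * g1 u) \<le> e * u / (g u * g1 u)"
          using gu by (intro divide_right_mono) auto
        have "e * u / (g u * g1 u) = e / q u * (1 / g1 u)" using gu u1 by (simp add: field_simps)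
        also have "\<dots> \<le> e / q x * (1 / g1 u)"
          using qu qx e gu gp[OF x(4)] u1 x by (intro mult_right_mono divide_left_mono) auto
        finally have d2: "\<bar>g u - g1 u\<bar> / (g u * g1 u) \<le> e / q x * (1 / g1 u)" using d by linarith
        have "1 / g u - 1 / g1 u = (g1 u - g u) / (g u * g1 u)" using gu by (simp add: field_simps)
        then have "\<bar>1 / g u - 1 / g1 u\<bar> \<le> e / q x * (1 / g1 u)"
          using d2 gu by (simp add: abs_divide abs_minus_commute)
        then show ?thesis by (simp add: abs_le_iff algebra_simps)
      qed
      have hS: "((\<lambda>u. 1 / g u) has_integral S) {x..W1}" unfolding S_def by (rule I_has[OF gc gp x(4)])
      have h1: "((\<lambda>u. 1 / g1 u) has_integral t) {x..W1}" using I_has[OF g1c g1p x(4), of W1] p1 by (simp add: W1_def)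
      have Sle: "S \<le> (1 + e / q x) * t"
        by (rule has_integral_le[OF hS has_integral_mult_right[OF h1]]) (use pw in auto)
      have Sge: "(1 - e / q x) * t \<le> S"
        by (rule has_integral_le[OF has_integral_mult_right[OF h1] hS]) (use pw in auto)
      have eq2: "e / q x \<le> 1 / (t + 1)"
      proof -
        have "e / q x \<le> e / q 2" using qx e q_pos[of 2] gp[OF x(4)] x by (intro divide_left_mono) auto
        also have "\<dots> \<le> 1 / (t + 1)" using e1 q_pos[of 2] t by (simp add: divide_le_eq field_simps)
        finally show ?thesis .
      qed
      have dS: "\<bar>S - t\<bar> \<le> e / q x * t" using Sle Sge by (simp add: abs_le_iff algebra_simps)
      have S0: "S \<ge> 0" unfolding S_def by (rule I_nonneg[OF gc gp x(4)])
      have et: "e / q x * t \<le> 1"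
      proof -
        have "e / q x * t \<le> 1 / (t + 1) * t" using eq2 t by (intro mult_right_mono) auto
        also have "\<dots> \<le> 1" using t by (simp add: divide_le_eq)
        finally show ?thesis .
      qed
      have W1eq: "W1 = wfun g x S" using W_eqI[OF gc gp divg x(4), of W1 S] p1 by (simp add: W1_def S_def)
      define s1 where "s1 = min S t"
      define s2 where "s2 = max S t"
      have s: "0 \<le> s1" "s1 \<le> s2" "s2 \<le> t + 1" "s2 - s1 = \<bar>S - t\<bar>"
        using S0 t dS et by (auto simp: s1_def s2_def)
      note m = W_mono_t[OF gc gp divg x(4) s(1) s(2)]
      have Ws1: "wfun g x s1 \<ge> x" using W_props(1)[OF gc gp divg x(4) s(1)] .
      have Ws1': "wfun g x s1 > 1" using Ws1 x by auto
      have "ln (wfun g x s2) - ln (wfun g x s1) \<le> q (wfun g x s2) * Ig g (wfun g x s1) (wfun g x s2)"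
        by (rule K2(2)[OF gc gp qm Ws1' m(1)])
      also have "\<dots> = q (wfun g x s2) * (s2 - s1)" using m(2) by simp
      also have "\<dots> \<le> (q x * K) * (e / q x * t)"
      proof (rule mult_mono)
        have "q (wfun g x s2) \<le> q x * exp ((\<kappa> + 1) * s2)"
          by (rule q_growth[OF X x(1)]) (use s in auto)
        also have "\<dots> \<le> q x * K"
          using s kappa_nonneg qx unfolding K_def by (intro mult_left_mono) (auto intro!: mult_left_mono)
        finally show "q (wfun g x s2) \<le> q x * K" .
        show "s2 - s1 \<le> e / q x * t" using s dS by simp
        show "0 \<le> q x * K" using qx K by (intro mult_nonneg_nonneg) auto
        show "0 \<le> s2 - s1" using s by simp
      qed
      also have "\<dots> = K * e * t" using gp[OF x(4)] x by (simp add: field_simps)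
      also have "\<dots> \<le> K * (\<eta> / (2 * (t + 1) * K)) * t" using e2 K t by (intro mult_right_mono mult_left_mono) auto
      also have "\<dots> = \<eta> * t / (2 * (t + 1))"
        using aux_cancel[of K \<eta> "2 * (t + 1)"] K by simp
      also have "\<dots> < \<eta>"
      proof -
        have "\<eta> * t < \<eta> * (2 * (t + 1))" using eta t by (intro mult_strict_left_mono) auto
        then show ?thesis using t by (simp add: divide_less_eq mult.commute)
      qed
      finally have bnd: "ln (wfun g x s2) - ln (wfun g x s1) < \<eta>" .
      have "\<bar>ln (wfun g x t) - ln (wfun g x S)\<bar> = ln (wfun g x s2) - ln (wfun g x s1)"
      proof (cases "S \<le> t")
        case True
        then have "s1 = S" "s2 = t" by (auto simp: s1_def s2_def)
        moreover have "ln (wfun g x S) \<le> ln (wfun g x t)" using m(1) Ws1' True by (simp add: \<open>s1 = S\<close> \<open>s2 = t\<close>)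
        ultimately show ?thesis by simp
      next
        case False
        then have "s1 = t" "s2 = S" by (auto simp: s1_def s2_def)
        moreover have "ln (wfun g x t) \<le> ln (wfun g x S)" using m(1) Ws1' False by (simp add: \<open>s1 = t\<close> \<open>s2 = S\<close>)
        ultimately show ?thesis by simp
      qed
      then show ?case using bnd W1eq by (simp add: dist_real_def W1_def)
    qed
  qed
  have "((\<lambda>x. exp (ln (wfun g x t) - ln (wfun g1 x t))) \<longlongrightarrow> exp 0) at_top"
    by (rule tendsto_exp[OF Dl])
  moreover have "\<forall>\<^sub>F x in at_top. exp (ln (wfun g x t) - ln (wfun g1 x t)) = wfun g x t / wfun g1 x t"
    using eventually_gt_at_top[of 1]
  proof eventually_elim
    case (elim x)
    have "wfun g x t > 0" "wfun g1 x t > 0"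
      using W_props(1)[OF gc gp divg elim t] W_props(1)[OF g1c g1p dv1 elim t] elim by auto
    then show ?case by (simp add: exp_diff)
  qed
  ultimately have "((\<lambda>x. wfun g x t / wfun g1 x t) \<longlongrightarrow> 1) at_top" using tendsto_cong by force
  then show ?thesis by (rule asymp_equivI')
qed

end

context flowB
begin

lemma part2_lnlim:
  assumes l: "l \<ge> 1" and t: "t \<ge> 0"
  shows "((\<lambda>x. ln (wfun g (l * x) t) - ln (wfun g x t)) \<longlongrightarrow> exp (\<kappa> * t) * ln l) at_top"
  unfolding tendsto_iff
proof (intro allI impI)
  fix \<eta> :: real assume eta: "\<eta> > 0"
  define ll where "ll = ln l"
  have ell: "ll \<ge> 0" using l by (simp add: ll_def)
  define L where "L = exp (\<kappa> * t) * ll"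
  have L0: "L \<ge> 0" using ell by (simp add: L_def)
  obtain \<sigma> where sig: "\<sigma> > 0" "\<And>z. \<bar>z\<bar> < \<sigma> \<Longrightarrow> \<bar>exp z - 1\<bar> < \<eta> / (L + 1)"
    using exp_near1[of "\<eta> / (L + 1)"] eta L0 by auto
  define \<epsilon> where "\<epsilon> = min 1 (min (\<sigma> / (4 * (t + 1))) (\<sigma> * q 2 / (4 * (ll + 1))))"
  have q2: "q 2 > 0" using q_pos[of 2] by simp
  have eps: "\<epsilon> > 0" using sig q2 t ell by (simp add: \<epsilon>_def)
  have e1: "\<epsilon> \<le> \<sigma> / (4 * (t + 1))" and e2: "\<epsilon> \<le> \<sigma> * q 2 / (4 * (ll + 1))"
    by (simp_all add: \<epsilon>_def)
  have et: "\<epsilon> * t \<le> \<sigma> / 4"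
  proof -
    have "\<epsilon> * t \<le> \<sigma> / (4 * (t + 1)) * t" using e1 t by (intro mult_right_mono) auto
    also have "\<dots> \<le> \<sigma> / 4" using sig t by (simp add: field_simps)
    finally show ?thesis .
  qed
  obtain X where X: "X \<ge> X0" "\<And>u. u \<ge> X \<Longrightarrow> \<bar>(u * g' u - g u) / u - \<kappa>\<bar> \<le> \<epsilon>"
    using r_ev[OF eps] by auto
  have "\<forall>\<^sub>F x in at_top. dist (\<kappa> / q x) 0 < \<sigma> / (4 * (ll + 1))"
    by (rule tendstoD[OF kq]) (use sig ell in auto)
  then have evk: "\<forall>\<^sub>F x in at_top. \<kappa> / q x < \<sigma> / (4 * (ll + 1))"
    by (rule eventually_mono) (metis abs_ge_self dist_real_def diff_zero order_le_less_trans)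
  show "\<forall>\<^sub>F x in at_top. dist (ln (wfun g (l * x) t) - ln (wfun g x t)) (exp (\<kappa> * t) * ln l) < \<eta>"
    using evk eventually_ge_at_top[of "max X 2"]
  proof eventually_elim
    case (elim x)
    have x: "x \<ge> X" "x \<ge> 2" "x > 1" using elim by auto
    define y where "y = l * x"
    have xy: "x \<le> y" using l x by (simp add: y_def)
    have y1: "y > 1" "y \<ge> X" using xy x by auto
    define A where "A = wfun g x t"
    define B where "B = wfun g y t"
    note mx = W_mono_x[OF gc gp divg x(3) xy t]
    note pA = W_props[OF gc gp divg x(3) t]
    note pB = W_props[OF gc gp divg y1(1) t]
    define I where "I = Ig g x y"
    have AB: "A \<le> B" "I = Ig g A B" using mx by (simp_all add: A_def B_def I_def)
    have A1: "A > 1" "A \<ge> X" using pA x by (auto simp: A_def)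
    have lnxy: "ln y - ln x = ll" using l x by (simp add: y_def ll_def ln_mult)
    have qx: "q x > 0" using q_pos x by simp
    have qy: "q y > 0" using q_pos y1 by simp
    have qA: "q A > 0" using q_pos A1 by simp
    have qB: "q B > 0" using q_pos A1 AB by simp
    have k1: "q x * I \<le> ll" "ll \<le> q y * I" using K2[OF gc gp qm x(3) xy] lnxy by (simp_all add: I_def)
    have k2: "q A * I \<le> ln B - ln A" "ln B - ln A \<le> q B * I" using K2[OF gc gp qm A1(1) AB(1)] AB(2) by simp_all
    have kA: "(\<kappa> - \<epsilon>) * t \<le> ln (q A) - ln (q x)" "ln (q A) - ln (q x) \<le> (\<kappa> + \<epsilon>) * t"
      using K1e[OF X x(1) pA(1)] pA(2) by (simp_all add: A_def)
    have kB: "(\<kappa> - \<epsilon>) * t \<le> ln (q B) - ln (q y)" "ln (q B) - ln (q y) \<le> (\<kappa> + \<epsilon>) * t"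
      using K1e[OF X y1(2) pB(1)] pB(2) by (simp_all add: B_def)
    define d where "d = ln (q y) - ln (q x)"
    have d0: "0 \<le> d" unfolding d_def by (rule K1z) (use xy x X in auto)
    have d1: "d \<le> (\<kappa> + \<epsilon>) * I" unfolding d_def I_def by (rule K1e(2)[OF X x(1) xy])
    have I0: "I \<ge> 0" unfolding I_def by (rule I_nonneg[OF gc gp x(3)])
    have Ile: "I \<le> ll / q x" using k1(1) by (subst pos_le_divide_eq[OF qx]) (simp add: mult.commute)
    have Ige: "ll / q y \<le> I" using k1(2) by (subst pos_divide_le_eq[OF qy]) (simp add: mult.commute)
    define \<delta> where "\<delta> = (\<kappa> + \<epsilon>) * (ll / q x)"
    have dd: "d \<le> \<delta>" using d1 Ile kappa_nonneg eps unfolding \<delta>_def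
      by (smt (verit) mult_left_mono)
    have delta: "\<delta> \<le> \<sigma> / 2"
    proof -
      have a: "\<kappa> * (ll / q x) \<le> \<sigma> / 4"
      proof -
        have "\<kappa> * (ll / q x) = \<kappa> / q x * ll" by simp
        also have "\<dots> \<le> \<sigma> / (4 * (ll + 1)) * ll" using elim(1) ell by (intro mult_right_mono) auto
        also have "\<dots> \<le> \<sigma> / 4" using sig ell by (simp add: field_simps)
        finally show ?thesis .
      qed
      have b: "\<epsilon> * (ll / q x) \<le> \<sigma> / 4"
      proof -
        have "ll / q x \<le> ll / q 2" using q_ge2[OF x(2)] q2 ell gp[OF x(3)] x by (intro divide_left_mono) auto
        then have "\<epsilon> * (ll / q x) \<le> \<epsilon> * (ll / q 2)" using eps by (intro mult_left_mono) auto
        also have "\<dots> \<le> \<sigma> * q 2 / (4 * (ll + 1)) * (ll / q 2)" using e2 ell q2 by (intro mult_right_mono) auto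
        also have "\<dots> = \<sigma> / 4 * (ll / (ll + 1))" using q2 ell by (simp add: field_simps)
        also have "\<dots> \<le> \<sigma> / 4" using sig ell by (simp add: mult_left_le divide_le_eq)
        finally show ?thesis .
      qed
      have "\<delta> = \<kappa> * (ll / q x) + \<epsilon> * (ll / q x)" unfolding \<delta>_def by (rule distrib_right)
      then show ?thesis using a b by linarith
    qed
    define s where "s = \<epsilon> * t + \<delta>"
    have et0: "0 \<le> \<epsilon> * t" using eps t by simp
    have s0: "0 \<le> s" "s < \<sigma>" using et0 et delta sig d0 dd unfolding s_def by linarith+
    then have s: "\<bar>s\<bar> < \<sigma>" "\<bar>- s\<bar> < \<sigma>" by auto
    have up: "ln B - ln A \<le> L * exp s"
    proof -
      have "ln B - ln A \<le> q B * (ll / q x)" using k2(2) Ile qB by (smt (verit) mult_left_mono)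
      also have "q B * (ll / q x) = ll * exp (ln (q B) - ln (q x))" using qB qx by (simp add: exp_diff)
      also have "\<dots> \<le> ll * exp (\<kappa> * t + s)"
        using kB(2) dd ell unfolding d_def s_def by (intro mult_left_mono) (auto simp: algebra_simps)
      also have "\<dots> = L * exp s" by (simp add: L_def exp_add)
      finally show ?thesis .
    qed
    have lo: "L * exp (- s) \<le> ln B - ln A"
    proof -
      have "L * exp (- s) = ll * exp (\<kappa> * t - s)" by (simp add: L_def exp_diff exp_minus field_simps)
      also have "\<dots> \<le> ll * exp (ln (q A) - ln (q y))"
        using kA(1) dd ell unfolding d_def s_def by (intro mult_left_mono) (auto simp: algebra_simps)
      also have "\<dots> = q A * (ll / q y)" using qA qy by (simp add: exp_diff)
      also have "\<dots> \<le> q A * I" using Ige qA by (intro mult_left_mono) auto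
      also have "\<dots> \<le> ln B - ln A" by (rule k2(1))
      finally show ?thesis .
    qed
    have E1: "\<bar>exp s - 1\<bar> < \<eta> / (L + 1)" "\<bar>exp (- s) - 1\<bar> < \<eta> / (L + 1)" using sig(2) s by auto
    have LL: "L * (\<eta> / (L + 1)) < \<eta>" using L0 eta by (simp add: field_simps)
    have "\<bar>L * exp z - L\<bar> \<le> L * (\<eta> / (L + 1))" if "\<bar>exp z - 1\<bar> < \<eta> / (L + 1)" for z
    proof -
      have "L * exp z - L = L * (exp z - 1)" by (simp add: right_diff_distrib)
      then have "\<bar>L * exp z - L\<bar> = \<bar>L\<bar> * \<bar>exp z - 1\<bar>" by (simp only: abs_mult)
      then have "\<bar>L * exp z - L\<bar> = L * \<bar>exp z - 1\<bar>" using L0 by simp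
      also have "\<dots> \<le> L * (\<eta> / (L + 1))" using that L0 by (intro mult_left_mono) auto
      finally show ?thesis .
    qed
    then have "\<bar>L * exp s - L\<bar> \<le> L * (\<eta> / (L + 1))" "\<bar>L * exp (- s) - L\<bar> \<le> L * (\<eta> / (L + 1))"
      using E1 by blast+
    then have "\<bar>(ln B - ln A) - L\<bar> < \<eta>" using up lo LL by (auto simp: abs_le_iff abs_less_iff)
    then show ?case by (simp add: dist_real_def A_def B_def y_def L_def ll_def)
  qed
qed

lemma part2:
  assumes t: "t \<ge> 0"
  shows "\<exists>L. slowly_varying L \<and> (\<forall>x\<ge>1. wfun g x t = x powr (exp (\<kappa> * t)) * L x)"
proof -
  define c where "c = exp (\<kappa> * t)"
  define L where "L x = wfun g x t / x powr c" for x
  have W1: "wfun g 1 t = 1" by (simp add: wfun_def)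
  have Wpos: "wfun g x t > 0" if "x \<ge> 1" for x
  proof (cases "x = 1")
    case True then show ?thesis using W1 by simp
  next
    case False then have "x > 1" using that by simp
    then show ?thesis using W_props(1)[OF gc gp divg _ t, of x] by auto
  qed
  have eqL: "\<forall>x\<ge>1. wfun g x t = x powr (exp (\<kappa> * t)) * L x" by (simp add: L_def c_def)
  have Lpos: "\<forall>x\<ge>1. 0 < L x" using Wpos by (simp add: L_def)
  have monoW: "mono (\<lambda>x. wfun g (max x 1) t)"
  proof (rule monoI)
    fix a b :: real assume ab: "a \<le> b"
    show "wfun g (max a 1) t \<le> wfun g (max b 1) t"
    proof (cases "max a 1 = 1")
      case True
      show ?thesis
      proof (cases "max b 1 = 1")
        case True then show ?thesis using \<open>max a 1 = 1\<close> by simp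
      next
        case False then have b1: "b > 1" by auto
        then have "max b 1 = b" by simp
        then show ?thesis using W_props(1)[OF gc gp divg b1 t] True W1 b1 by simp
      qed
    next
      case False then have "max a 1 > 1" by auto
      then show ?thesis using W_mono_x(1)[OF gc gp divg _ _ t, of "max a 1" "max b 1"] ab by auto
    qed
  qed
  have meas: "set_borel_measurable borel {1..} L"
  proof -
    have m1: "(\<lambda>x. wfun g (max x 1) t) \<in> borel_measurable borel" by (rule borel_measurable_mono[OF monoW])
    have "(\<lambda>x. indicator {1..} x *\<^sub>R (wfun g (max x 1) t / x powr c)) \<in> borel_measurable borel"
      using m1 by measurable
    moreover have "(\<lambda>x. indicator {1..} x *\<^sub>R (wfun g (max x 1) t / x powr c)) = (\<lambda>x. indicator {1..} x *\<^sub>R L x)"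
      by (auto simp: fun_eq_iff L_def indicator_def max_def)
    ultimately show ?thesis unfolding set_borel_measurable_def by simp
  qed
  have lim1: "((\<lambda>x. L (l * x) / L x) \<longlongrightarrow> 1) at_top" if l: "l \<ge> 1" for l
  proof -
    have a: "((\<lambda>x. ln (wfun g (l * x) t) - ln (wfun g x t)) \<longlongrightarrow> c * ln l) at_top"
      using part2_lnlim[OF l t] by (simp add: c_def)
    have "((\<lambda>x. exp (ln (wfun g (l * x) t) - ln (wfun g x t)) / l powr c) \<longlongrightarrow> exp (c * ln l) / l powr c) at_top"
      by (rule tendsto_divide[OF tendsto_exp[OF a] tendsto_const]) (use l in simp)
    moreover have "exp (c * ln l) / l powr c = 1" using l by (simp add: powr_def)
    moreover have "\<forall>\<^sub>F x in at_top. exp (ln (wfun g (l * x) t) - ln (wfun g x t)) / l powr c = L (l * x) / L x"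
      using eventually_ge_at_top[of 1]
    proof eventually_elim
      case (elim x)
      have lx: "l * x \<ge> 1" using l elim by (metis mult_le_cancel_left1 order.trans less_le_trans zero_less_one order_refl mult_mono less_imp_le)
      have p: "wfun g (l * x) t > 0" "wfun g x t > 0" using Wpos lx elim by auto
      have "(l * x) powr c = l powr c * x powr c" using l elim by (simp add: powr_mult)
      then show ?case using p l elim by (simp add: L_def exp_diff field_simps)
    qed
    ultimately show ?thesis using tendsto_cong by force
  qed
  have lim: "((\<lambda>x. L (l * x) / L x) \<longlongrightarrow> 1) at_top" if l: "l > 0" for l
  proof (cases "l \<ge> 1")
    case True then show ?thesis using lim1 by simp
  next
    case False
    then have l1: "1 / l \<ge> 1" using l by (simp add: field_simps)
    have f: "filterlim (\<lambda>x. l * x) at_top at_top"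
      using filterlim_tendsto_pos_mult_at_top[OF tendsto_const l filterlim_ident] .
    have "((\<lambda>x. L (1 / l * (l * x)) / L (l * x)) \<longlongrightarrow> 1) at_top"
      using filterlim_compose[OF lim1[OF l1] f] by simp
    then have "((\<lambda>x. inverse (L (1 / l * (l * x)) / L (l * x))) \<longlongrightarrow> inverse 1) at_top"
      by (rule tendsto_inverse) simp
    then show ?thesis using l by (simp add: field_simps)
  qed
  show ?thesis
    by (intro exI[of _ L] conjI eqL) (use Lpos meas lim in \<open>auto simp: slowly_varying_def\<close>)
qed

end

lemma rlim_from_hyp:
  fixes Xi :: "(nat \<Rightarrow> real) measure"
  assumes fin: "finite_measure Xi" and sets: "sets Xi = sets (restrict_space borel Delta)"
    and hyp: "((\<lambda>x. x * deriv (deriv (gamma Xi)) x) \<longlongrightarrow> \<kappa>) at_top"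
  shows "((\<lambda>x. (x * D1 Xi x - gamma Xi x) / x) \<longlongrightarrow> \<kappa>) at_top"
proof (rule lhospital_at_top_at_top[where g' = "\<lambda>_. 1" and f' = "\<lambda>x. x * D2 Xi x"])
  show "filterlim (\<lambda>x. x) at_top at_top" by (rule filterlim_ident)
  show "\<forall>\<^sub>F x in at_top. (1::real) \<noteq> 0" by simp
  show "\<forall>\<^sub>F x in at_top. ((\<lambda>x. x * D1 Xi x - gamma Xi x) has_real_derivative x * D2 Xi x) (at x)"
    using eventually_gt_at_top[of 2]
  proof eventually_elim
    case (elim x)
    have d1: "(D1 Xi has_real_derivative D2 Xi x) (at x)" by (rule D1_deriv[OF fin sets elim])
    have d0: "(gamma Xi has_real_derivative D1 Xi x) (at x)" by (rule gamma_deriv[OF fin sets]) (use elim in simp)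
    have "((\<lambda>x. x * D1 Xi x - gamma Xi x) has_real_derivative (1 * D1 Xi x + D2 Xi x * x) - D1 Xi x) (at x)"
      by (rule DERIV_diff[OF DERIV_mult[OF DERIV_ident d1] d0])
    then show ?case by (simp add: mult.commute)
  qed
  show "\<forall>\<^sub>F x in at_top. ((\<lambda>x. x) has_real_derivative 1) (at x)" by simp
  have "\<forall>\<^sub>F x in at_top. x * deriv (deriv (gamma Xi)) x = x * D2 Xi x / 1"
    using eventually_gt_at_top[of 2] by eventually_elim (simp add: deriv2_gamma[OF fin sets])
  then have "((\<lambda>x. x * deriv (deriv (gamma Xi)) x) \<longlongrightarrow> \<kappa>) at_top \<longleftrightarrow> ((\<lambda>x. x * D2 Xi x / 1) \<longlongrightarrow> \<kappa>) at_top"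
    by (rule tendsto_cong)
  then show "((\<lambda>x. x * D2 Xi x / 1) \<longlongrightarrow> \<kappa>) at_top" using hyp by simp
qed

theorem mainTheorem8:
  fixes Xi :: "(nat \<Rightarrow> real) measure"
  assumes fin: "finite_measure Xi"
    and sets: "sets Xi = sets (restrict_space borel Delta)"
    and nonzero: "emeasure Xi Delta \<noteq> 0"
  shows
   "(atom0 Xi = 0 \<and> mu Xi < \<infinity> \<longrightarrow>
       (\<forall>t\<ge>0. (\<lambda>x. wfun (gamma Xi) x t) \<sim>[at_top] (\<lambda>x. x * exp (enn2real (mu Xi) * t))))
    \<and> (\<forall>\<kappa>. ((\<lambda>x. x * deriv (deriv (gamma Xi)) x) \<longlongrightarrow> \<kappa>) at_top \<longrightarrow>
         (\<forall>t\<ge>0. \<exists>L. slowly_varying L \<and>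
             (\<forall>x\<ge>1. wfun (gamma Xi) x t = x powr (exp (\<kappa> * t)) * L x)))
    \<and> (\<forall>\<kappa> (g1 :: real \<Rightarrow> real).
         ((\<lambda>x. x * deriv (deriv (gamma Xi)) x) \<longlongrightarrow> \<kappa>) at_top
         \<and> continuous_on {1<..} g1 \<and> (\<forall>x>1. 0 < g1 x)
         \<and> ((\<lambda>x. (gamma Xi x - g1 x) / x) \<longlongrightarrow> 0) at_top \<longrightarrow>
         (\<forall>t\<ge>0. \<forall>x>1. \<exists>!y. x \<le> y \<and> ((\<lambda>u. 1 / g1 u) has_integral t) {x..y})
         \<and> ((\<kappa> = 0 \<longrightarrow> mono_on {1<..} (\<lambda>x. g1 x / x)) \<longrightarrow>
             (\<forall>t\<ge>0. (\<lambda>x. wfun (gamma Xi) x t) \<sim>[at_top] (\<lambda>x. wfun g1 x t))))"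
proof -
  have gc: "continuous_on {1<..} (gamma Xi)" by (rule gamma_cont[OF fin sets])
  have gp: "\<And>x. x > 1 \<Longrightarrow> gamma Xi x > 0" by (rule gamma_pos[OF fin sets nonzero])
  have qm: "mono_on {1<..} (\<lambda>x. gamma Xi x / x)" by (rule q_mono[OF fin sets])
  have fB: "flowB (gamma Xi) (D1 Xi) \<kappa> 3"
    if hyp: "((\<lambda>x. x * deriv (deriv (gamma Xi)) x) \<longlongrightarrow> \<kappa>) at_top" for \<kappa>
  proof
    show "continuous_on {1<..} (gamma Xi)" by fact
    show "\<And>x. x > 1 \<Longrightarrow> gamma Xi x > 0" by fact
    show "mono_on {1<..} (\<lambda>x. gamma Xi x / x)" by fact
    show "(3::real) > 1" by simp
    show "(gamma Xi has_real_derivative D1 Xi x) (at x)" if "x \<ge> 3" for x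
      by (rule gamma_deriv[OF fin sets]) (use that in simp)
    show "0 \<le> x * D1 Xi x - gamma Xi x" if "x \<ge> 3" for x
      by (rule H_nonneg[OF fin sets]) (use that in simp)
    show "((\<lambda>x. (x * D1 Xi x - gamma Xi x) / x) \<longlongrightarrow> \<kappa>) at_top"
      by (rule rlim_from_hyp[OF fin sets hyp])
  qed
  have P1: "atom0 Xi = 0 \<and> mu Xi < \<infinity> \<longrightarrow>
       (\<forall>t\<ge>0. (\<lambda>x. wfun (gamma Xi) x t) \<sim>[at_top] (\<lambda>x. x * exp (enn2real (mu Xi) * t)))"
  proof (intro impI allI)
    fix t :: real assume a: "atom0 Xi = 0 \<and> mu Xi < \<infinity>" and t: "t \<ge> 0"
    show "(\<lambda>x. wfun (gamma Xi) x t) \<sim>[at_top] (\<lambda>x. x * exp (enn2real (mu Xi) * t))"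
    proof (rule part1_abstract[OF gc gp qm _ t])
      show "((\<lambda>x. gamma Xi x / x) \<longlongrightarrow> enn2real (mu Xi)) at_top"
        using q_lim[OF fin sets] a by blast
    qed
  qed
  have P2: "\<forall>\<kappa>. ((\<lambda>x. x * deriv (deriv (gamma Xi)) x) \<longlongrightarrow> \<kappa>) at_top \<longrightarrow>
         (\<forall>t\<ge>0. \<exists>L. slowly_varying L \<and>
             (\<forall>x\<ge>1. wfun (gamma Xi) x t = x powr (exp (\<kappa> * t)) * L x))"
  proof (intro allI impI)
    fix \<kappa> t :: real assume hyp: "((\<lambda>x. x * deriv (deriv (gamma Xi)) x) \<longlongrightarrow> \<kappa>) at_top" and t: "t \<ge> 0"
    interpret flowB "gamma Xi" "D1 Xi" \<kappa> 3 by (rule fB[OF hyp])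
    show "\<exists>L. slowly_varying L \<and> (\<forall>x\<ge>1. wfun (gamma Xi) x t = x powr (exp (\<kappa> * t)) * L x)"
      by (rule part2[OF t])
  qed
  have P3: "\<forall>\<kappa> (g1 :: real \<Rightarrow> real).
         ((\<lambda>x. x * deriv (deriv (gamma Xi)) x) \<longlongrightarrow> \<kappa>) at_top
         \<and> continuous_on {1<..} g1 \<and> (\<forall>x>1. 0 < g1 x)
         \<and> ((\<lambda>x. (gamma Xi x - g1 x) / x) \<longlongrightarrow> 0) at_top \<longrightarrow>
         (\<forall>t\<ge>0. \<forall>x>1. \<exists>!y. x \<le> y \<and> ((\<lambda>u. 1 / g1 u) has_integral t) {x..y})
         \<and> ((\<kappa> = 0 \<longrightarrow> mono_on {1<..} (\<lambda>x. g1 x / x)) \<longrightarrow>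
             (\<forall>t\<ge>0. (\<lambda>x. wfun (gamma Xi) x t) \<sim>[at_top] (\<lambda>x. wfun g1 x t)))"
  proof (intro allI impI)
    fix \<kappa> :: real and g1 :: "real \<Rightarrow> real"
    assume h: "((\<lambda>x. x * deriv (deriv (gamma Xi)) x) \<longlongrightarrow> \<kappa>) at_top
         \<and> continuous_on {1<..} g1 \<and> (\<forall>x>1. 0 < g1 x)
         \<and> ((\<lambda>x. (gamma Xi x - g1 x) / x) \<longlongrightarrow> 0) at_top"
    then have hyp: "((\<lambda>x. x * deriv (deriv (gamma Xi)) x) \<longlongrightarrow> \<kappa>) at_top"
      and g1c: "continuous_on {1<..} g1" and g1p: "\<And>x. x > 1 \<Longrightarrow> 0 < g1 x"
      and lim: "((\<lambda>x. (gamma Xi x - g1 x) / x) \<longlongrightarrow> 0) at_top" by auto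
    interpret flowB "gamma Xi" "D1 Xi" \<kappa> 3 by (rule fB[OF hyp])
    have dv1: "divg g1" by (rule part3_div[OF g1c g1p lim])
    show "(\<forall>t\<ge>0. \<forall>x>1. \<exists>!y. x \<le> y \<and> ((\<lambda>u. 1 / g1 u) has_integral t) {x..y})
         \<and> ((\<kappa> = 0 \<longrightarrow> mono_on {1<..} (\<lambda>x. g1 x / x)) \<longrightarrow>
             (\<forall>t\<ge>0. (\<lambda>x. wfun (gamma Xi) x t) \<sim>[at_top] (\<lambda>x. wfun g1 x t)))"
    proof (intro conjI allI impI)
      fix t x :: real assume "t \<ge> 0" "x > 1"
      then show "\<exists>!y. x \<le> y \<and> ((\<lambda>u. 1 / g1 u) has_integral t) {x..y}"
        by (intro W_ex1[OF g1c g1p dv1])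
    next
      fix t :: real assume "t \<ge> 0"
      then show "(\<lambda>x. wfun (gamma Xi) x t) \<sim>[at_top] (\<lambda>x. wfun g1 x t)"
        using part3_equiv[OF g1c g1p lim] by metis
    qed
  qed
  show ?thesis by (intro conjI P1 P2 P3)
qed


end
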